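(* Let $d\ge1$, $Q=2d+2$, and let $X_1,\dots,X_{2d}$ be the Heisenberg vector fields on $\mathbb{R}^{2d+1}$. Let $0<\lambda\le\Lambda$, $A$ an index set, $b^\alpha:\mathbb{R}^{2d+1}\to\mathbb{R}^{2d}$, $c^\alpha:\mathbb{R}^{2d+1}\to\mathbb{R}$ with $H_i(x,r,p)=\inf_\alpha\{c^\alpha(x)r-b^\alpha(x)\cdot p\}$ and $H_s(x,r,p)=\sup_\alpha\{c^\alpha(x)r-b^\alpha(x)\cdot p\}$ finite, $b^\alpha$ locally Lipschitz uniformly in $\alpha$ (for every $R>0$ there is $K_R$ with $\sup_{|x|,|y|\le R,\alpha}|b^\alpha(x)-b^\alpha(y)|\le K_R|x-y|$), and $c^\alpha\ge0$ continuous on each ball $\{|x|\le R\}$ uniformly in $\alpha$. Assume $$\sup_{\alpha\in A}\Big\{b^\alpha(x)\cdot\frac{\eta}{|x_H|^2}-c^\alpha(x)\frac{\rho^4}{|x_H|^2}\log\rho\Big\}\le\lambda-\Lambda(Q-1)$$ for all $x$ with $\rho(x)$ sufficiently large and $|x_H|\ne0$. (A) Let $u\in\mathrm{USC}(\mathbb{R}^{2d+1})$ be a viscosity subsolution of $\mathcal{M}^-_{\lambda,\Lambda}((D^2_{\mathbb{H}^d}u)^* )+H_i(x,u,D_{\mathbb{H}^d}u)=0$ in $\mathbb{R}^{2d+1}$ with $\limsup_{|x|\to\infty}\frac{u(x)}{\log\rho(x)}\le0$. If either $c^\alpha\equiv0$ or $u\ge0$, then $u$ is constant. (B) Let $v\in\mathrm{LSC}(\mathbb{R}^{2d+1})$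 be a viscosity supersolution of $\mathcal{M}^+_{\lambda,\Lambda}((D^2_{\mathbb{H}^d}v)^* )+H_s(x,v,D_{\mathbb{H}^d}v)=0$ in $\mathbb{R}^{2d+1}$ with $\liminf_{|x|\to\infty}\frac{v(x)}{\log\rho(x)}\ge0$. If either $c^\alpha\equiv0$ or $v\le0$, then $v$ is constant.
   Context: Heisenberg vector fields on $\mathbb{R}^{2d+1}$: $X_i=\partial_i+2x_{i+d}\partial_{2d+1}$, $X_{i+d}=\partial_{i+d}-2x_i\partial_{2d+1}$, $i=1,\dots,d$. $x_H=(x_1,\dots,x_{2d})$; $\rho(x)=(|x_H|^4+x_{2d+1}^2)^{1/4}$; $\eta\in\mathbb{R}^{2d}$ with $\eta_i=x_i|x_H|^2+x_{i+d}x_{2d+1}$, $\eta_{i+d}=x_{i+d}|x_H|^2-x_ix_{2d+1}$ for $i=1,\dots,d$. $D_{\mathbb{H}^d}u=(X_1u,\dots,X_{2d}u)$, $(D^2_{\mathbb{H}^d}u)_{ij}=X_i(X_ju)$, and $Y^*$ is the symmetrized matrix of $Y$; equations are understood in the viscosity sense after rewriting in Euclidean variables. Pucci operators on symmetric $2d\times2d$ matrices: $\mathcal{M}^+_{\lambda,\Lambda}(M)=\sup\mathrm{Tr}(-AM)$, $\mathcal{M}^-_{\lambda,\Lambda}(M)=\inf\mathrm{Tr}(-AM)$, over symmetric $A$ with $\lambda|\xi|^2\le A\xi\cdot\xi\le\Lambda|\xi|^2$. *)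

theory Defs
  imports "HOL-Analysis.Analysis"
begin

text \<open>Points of R^(2d+1): vectors indexed by 'd + 'd + unit.
  Coordinate Inl i is x_i, Inr (Inl i) is x_(i+d), Inr (Inr ()) is x_(2d+1).
  Horizontal vectors (R^(2d)) are indexed by 'd + 'd.\<close>

type_synonym 'd pt = "real ^ ('d + 'd + unit)"
type_synonym 'd hz = "real ^ ('d + 'd)"

definition tcoord :: "('d::finite) pt \<Rightarrow> real" where
  "tcoord x = x $ Inr (Inr ())"

definition hproj :: "('d::finite) pt \<Rightarrow> 'd hz" where
  "hproj x = (\<chi> i. case i of Inl k \<Rightarrow> x $ Inl k | Inr k \<Rightarrow> x $ Inr (Inl k))"

definition hrho :: "('d::finite) pt \<Rightarrow> real" where
  "hrho x = ((norm (hproj x)) ^ 4 + (tcoord x)\<^sup>2) powr (1/4)"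

definition heta :: "('d::finite) pt \<Rightarrow> 'd hz" where
  "heta x = (\<chi> i. case i of
      Inl k \<Rightarrow> x $ Inl k * (norm (hproj x))\<^sup>2 + x $ Inr (Inl k) * tcoord x
    | Inr k \<Rightarrow> x $ Inr (Inl k) * (norm (hproj x))\<^sup>2 - x $ Inl k * tcoord x)"

definition hfield :: "('d + 'd) \<Rightarrow> ('d::finite) pt \<Rightarrow> 'd pt" where
  "hfield i x = (case i of
      Inl k \<Rightarrow> axis (Inl k) 1 + (2 * x $ Inr (Inl k)) *\<^sub>R axis (Inr (Inr ())) 1
    | Inr k \<Rightarrow> axis (Inr (Inl k)) 1 - (2 * x $ Inl k) *\<^sub>R axis (Inr (Inr ())) 1)"

definition hderiv :: "('d + 'd) \<Rightarrow> (('d::finite) pt \<Rightarrow> real) \<Rightarrow> 'd pt \<Rightarrow> real" where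
  "hderiv i f x = frechet_derivative f (at x) (hfield i x)"

definition hgrad :: "(('d::finite) pt \<Rightarrow> real) \<Rightarrow> 'd pt \<Rightarrow> 'd hz" where
  "hgrad f x = (\<chi> i. hderiv i f x)"

definition hhess :: "(('d::finite) pt \<Rightarrow> real) \<Rightarrow> 'd pt \<Rightarrow> real ^ ('d + 'd) ^ ('d + 'd)" where
  "hhess f x = (\<chi> i j. hderiv i (hderiv j f) x)"

definition symm :: "real ^ 'n ^ 'n \<Rightarrow> real ^ 'n ^ 'n" where
  "symm Y = (1/2) *\<^sub>R (Y + transpose Y)"

definition pucci_adm :: "real \<Rightarrow> real \<Rightarrow> real ^ ('n::finite) ^ 'n \<Rightarrow> bool" where
  "pucci_adm l L A \<longleftrightarrow> transpose A = A \<and>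
     (\<forall>\<xi>. l * (norm \<xi>)\<^sup>2 \<le> \<xi> \<bullet> (A *v \<xi>) \<and> \<xi> \<bullet> (A *v \<xi>) \<le> L * (norm \<xi>)\<^sup>2)"

definition pucci_plus :: "real \<Rightarrow> real \<Rightarrow> real ^ ('n::finite) ^ 'n \<Rightarrow> real" where
  "pucci_plus l L M = (SUP A \<in> {A. pucci_adm l L A}. trace (- (A ** M)))"

definition pucci_minus :: "real \<Rightarrow> real \<Rightarrow> real ^ ('n::finite) ^ 'n \<Rightarrow> real" where
  "pucci_minus l L M = (INF A \<in> {A. pucci_adm l L A}. trace (- (A ** M)))"

definition C2 :: "(real ^ ('n::finite) \<Rightarrow> real) \<Rightarrow> bool" where
  "C2 f \<longleftrightarrow> (\<exists>g H. (\<forall>x. (f has_derivative (\<lambda>h. g x \<bullet> h)) (at x)) \<and>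
                    (\<forall>x. (g has_derivative (\<lambda>h. H x *v h)) (at x)) \<and>
                    continuous_on UNIV H)"

definition usc :: "('a::topological_space \<Rightarrow> real) \<Rightarrow> bool" where
  "usc u \<longleftrightarrow> (\<forall>t. open {x. u x < t})"

definition lsc :: "('a::topological_space \<Rightarrow> real) \<Rightarrow> bool" where
  "lsc u \<longleftrightarrow> (\<forall>t. open {x. u x > t})"

definition visc_sub ::
  "(('d::finite) pt \<Rightarrow> real \<Rightarrow> 'd hz \<Rightarrow> real ^ ('d + 'd) ^ ('d + 'd) \<Rightarrow> real) \<Rightarrow> ('d pt \<Rightarrow> real) \<Rightarrow> bool" where
  "visc_sub F u \<longleftrightarrow> usc u \<and>
     (\<forall>\<phi> x0. C2 \<phi> \<longrightarrow> (\<exists>e>0. \<forall>y\<in>ball x0 e. u y - \<phi> y \<le> u x0 - \<phi> x0) \<longrightarrow>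
        F x0 (u x0) (hgrad \<phi> x0) (symm (hhess \<phi> x0)) \<le> 0)"

definition visc_super ::
  "(('d::finite) pt \<Rightarrow> real \<Rightarrow> 'd hz \<Rightarrow> real ^ ('d + 'd) ^ ('d + 'd) \<Rightarrow> real) \<Rightarrow> ('d pt \<Rightarrow> real) \<Rightarrow> bool" where
  "visc_super F v \<longleftrightarrow> lsc v \<and>
     (\<forall>\<phi> x0. C2 \<phi> \<longrightarrow> (\<exists>e>0. \<forall>y\<in>ball x0 e. v y - \<phi> y \<ge> v x0 - \<phi> x0) \<longrightarrow>
        F x0 (v x0) (hgrad \<phi> x0) (symm (hhess \<phi> x0)) \<ge> 0)"

end

theory Submission
  imports Defs
begin


definition C2w :: "(real ^ ('n::finite) \<Rightarrow> real) \<Rightarrow> (real ^ 'n \<Rightarrow> real ^ 'n) \<Rightarrow> (real ^ 'n \<Rightarrow> real ^ 'n ^ 'n) \<Rightarrow> bool" where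
  "C2w f g H \<longleftrightarrow> (\<forall>x. (f has_derivative (\<lambda>h. g x \<bullet> h)) (at x)) \<and>
                    (\<forall>x. (g has_derivative (\<lambda>h. H x *v h)) (at x)) \<and>
                    continuous_on UNIV H"

lemma C2w_C2: "C2w f g H \<Longrightarrow> C2 f"
  unfolding C2w_def C2_def by blast

definition et :: "('d::finite) pt" where "et = axis (Inr (Inr ())) 1"

definition dfield :: "('d + 'd) \<Rightarrow> ('d::finite) pt \<Rightarrow> 'd pt" where
  "dfield i h = (case i of Inl k \<Rightarrow> (2 * h $ Inr (Inl k)) *\<^sub>R et
                          | Inr k \<Rightarrow> - ((2 * h $ Inl k) *\<^sub>R et))"

lemma hd_nth[derivative_intros]: "((\<lambda>x. x $ i) has_derivative (\<lambda>x. x $ i)) (at x within S)"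
  by (rule bounded_linear_imp_has_derivative) (rule bounded_linear_vec_nth)

lemma hfield_deriv: "(hfield i has_derivative dfield i) (at x)"
proof (cases i)
  case (Inl k)
  show ?thesis unfolding hfield_def dfield_def Inl et_def
    by (auto intro!: derivative_eq_intros bounded_linear_vec_nth)
next
  case (Inr k)
  show ?thesis unfolding hfield_def dfield_def Inr et_def
    by (auto intro!: derivative_eq_intros bounded_linear_vec_nth)
qed

lemma C2w_cont_f: assumes "C2w f g H" shows "continuous_on UNIV f"
proof (rule continuous_at_imp_continuous_on, rule ballI)
  fix x
  have "(f has_derivative (\<lambda>h. g x \<bullet> h)) (at x)" using assms unfolding C2w_def by blast
  then show "isCont f x" by (rule has_derivative_continuous)
qed

lemma C2w_cont_g: assumes "C2w f g H" shows "continuous_on UNIV g"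
proof (rule continuous_at_imp_continuous_on, rule ballI)
  fix x
  have "(g has_derivative (\<lambda>h. H x *v h)) (at x)" using assms unfolding C2w_def by blast
  then show "isCont g x" by (rule has_derivative_continuous)
qed

lemma C2w_cont_H: "C2w f g H \<Longrightarrow> continuous_on UNIV H"
  unfolding C2w_def by blast

lemma hderiv_C2w: assumes "C2w f g H" shows "hderiv i f x = g x \<bullet> hfield i x"
proof -
  have "(f has_derivative (\<lambda>h. g x \<bullet> h)) (at x)" using assms unfolding C2w_def by blast
  from frechet_derivative_at[OF this] have "frechet_derivative f (at x) = (\<lambda>h. g x \<bullet> h)" by simp
  then show ?thesis unfolding hderiv_def by simp
qed

lemma hderiv2_C2w: assumes "C2w f g H"
  shows "hderiv i (hderiv j f) x = (H x *v hfield i x) \<bullet> hfield j x + g x \<bullet> dfield j (hfield i x)"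
proof -
  have e: "hderiv j f = (\<lambda>y. g y \<bullet> hfield j y)" using hderiv_C2w[OF assms] by blast
  have "(g has_derivative (\<lambda>h. H x *v h)) (at x)" using assms unfolding C2w_def by blast
  from has_derivative_inner[OF this hfield_deriv]
  have "((\<lambda>y. g y \<bullet> hfield j y) has_derivative (\<lambda>h. g x \<bullet> dfield j h + (H x *v h) \<bullet> hfield j x)) (at x)" .
  from frechet_derivative_at[OF this]
  have "frechet_derivative (\<lambda>y. g y \<bullet> hfield j y) (at x) = (\<lambda>h. g x \<bullet> dfield j h + (H x *v h) \<bullet> hfield j x)" by simp
  then show ?thesis unfolding hderiv_def e by simp
qed

definition HG :: "(('d::finite) pt \<Rightarrow> 'd pt) \<Rightarrow> 'd pt \<Rightarrow> 'd hz" where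
  "HG g x = (\<chi> i. g x \<bullet> hfield i x)"

definition HH :: "(('d::finite) pt \<Rightarrow> 'd pt) \<Rightarrow> ('d pt \<Rightarrow> real ^ ('d+'d+unit) ^ ('d+'d+unit)) \<Rightarrow> 'd pt \<Rightarrow> real ^ ('d+'d) ^ ('d+'d)" where
  "HH g H x = (\<chi> i j. (H x *v hfield i x) \<bullet> hfield j x + g x \<bullet> dfield j (hfield i x))"

lemma hgrad_C2w: "C2w f g H \<Longrightarrow> hgrad f x = HG g x"
  unfolding hgrad_def HG_def using hderiv_C2w[of f g H] by simp

lemma hhess_C2w: "C2w f g H \<Longrightarrow> hhess f x = HH g H x"
  unfolding hhess_def HH_def using hderiv2_C2w[of f g H] by simp

definition outer :: "real ^ ('n::finite) \<Rightarrow> real ^ 'n \<Rightarrow> real ^ 'n ^ 'n" where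
  "outer u v = (\<chi> i j. u $ i * v $ j)"


lemma outer_mv: "outer u v *v h = (v \<bullet> h) *\<^sub>R u"
proof -
  have "(\<Sum>j\<in>UNIV. u $ i * (v $ j * h $ j)) = (\<Sum>j\<in>UNIV. v $ j * h $ j) * u $ i" for i
    by (simp add: sum_distrib_left[symmetric] mult.commute)
  then show ?thesis by (simp add: vec_eq_iff outer_def matrix_vector_mult_def inner_vec_def mult.assoc)
qed

lemma mv_add: "(M + N) *v h = M *v h + N *v (h :: real ^ 'n::finite)"
  by (simp add: vec_eq_iff matrix_vector_mult_def sum.distrib distrib_right)

lemma mv_scale: "(c *\<^sub>R M) *v h = c *\<^sub>R (M *v (h :: real ^ 'n::finite))"
  by (simp add: vec_eq_iff matrix_vector_mult_def sum_distrib_left mult.assoc)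

lemma mv_zero: "(0::real^'n^'m) *v h = 0"
  by simp

lemma mv_sum: "finite S \<Longrightarrow> (\<Sum>j\<in>S. M j) *v h = (\<Sum>j\<in>S. M j *v (h :: real ^ 'n::finite))"
  by (induction S rule: finite_induct) (auto simp: mv_add)

lemma continuous_on_outer[continuous_intros]:
  "continuous_on S u \<Longrightarrow> continuous_on S v \<Longrightarrow> continuous_on S (\<lambda>x. outer (u x) (v x))"
  unfolding outer_def by (intro continuous_intros)

lemma C2w_const: "C2w (\<lambda>_. a) (\<lambda>_. 0) (\<lambda>_. 0)"
proof -
  have "((\<lambda>_. a) has_derivative (\<lambda>h. 0 \<bullet> h)) (at x)" for x :: "real^'n::finite"
    using has_derivative_const[of a "at x"] by simp
  moreover have "((\<lambda>_. 0::real^'n) has_derivative (\<lambda>h. (0::real^'n^'n) *v h)) (at x)" for x :: "real^'n::finite"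
    using has_derivative_const[of "0::real^'n" "at x"] by simp
  moreover have "continuous_on UNIV (\<lambda>_::real^'n. 0::real^'n^'n)" by (rule continuous_on_const)
  ultimately show ?thesis unfolding C2w_def by blast
qed

lemma C2w_lin: fixes a :: "real^'n::finite" shows "C2w (\<lambda>x. a \<bullet> x) (\<lambda>_. a) (\<lambda>_. 0)"
proof -
  have "((\<lambda>x. a \<bullet> x) has_derivative (\<lambda>h. a \<bullet> h)) (at x)" for x :: "real^'n::finite"
    by (rule bounded_linear_imp_has_derivative) (rule bounded_linear_inner_right)
  moreover have "((\<lambda>_. a) has_derivative (\<lambda>h. (0::real^'n^'n) *v h)) (at x)" for x :: "real^'n::finite"
    using has_derivative_const[of a "at x"] by simp
  moreover have "continuous_on UNIV (\<lambda>_::real^'n. 0::real^'n^'n)" by (rule continuous_on_const)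
  ultimately show ?thesis unfolding C2w_def by blast
qed

lemma C2w_add: assumes "C2w f1 g1 H1" "C2w f2 g2 H2"
  shows "C2w (\<lambda>x. f1 x + f2 x) (\<lambda>x. g1 x + g2 x) (\<lambda>x. H1 x + H2 x)"
proof -
  have a1: "(f1 has_derivative (\<lambda>h. g1 x \<bullet> h)) (at x)" "(g1 has_derivative (\<lambda>h. H1 x *v h)) (at x)"
    "(f2 has_derivative (\<lambda>h. g2 x \<bullet> h)) (at x)" "(g2 has_derivative (\<lambda>h. H2 x *v h)) (at x)" for x
    using assms unfolding C2w_def by blast+
  have "((\<lambda>x. f1 x + f2 x) has_derivative (\<lambda>h. (g1 x + g2 x) \<bullet> h)) (at x)" for x
    using has_derivative_add[OF a1(1) a1(3)] by (simp add: inner_add_left)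
  moreover have "((\<lambda>x. g1 x + g2 x) has_derivative (\<lambda>h. (H1 x + H2 x) *v h)) (at x)" for x
    using has_derivative_add[OF a1(2) a1(4)] by (simp add: mv_add)
  moreover have "continuous_on UNIV (\<lambda>x. H1 x + H2 x)"
    using assms unfolding C2w_def by (intro continuous_on_add) auto
  ultimately show ?thesis unfolding C2w_def by blast
qed

lemma C2w_scale: assumes "C2w f g H"
  shows "C2w (\<lambda>x. c * f x) (\<lambda>x. c *\<^sub>R g x) (\<lambda>x. c *\<^sub>R H x)"
proof -
  have a1: "(f has_derivative (\<lambda>h. g x \<bullet> h)) (at x)" "(g has_derivative (\<lambda>h. H x *v h)) (at x)" for x
    using assms unfolding C2w_def by blast+
  have "((\<lambda>x. c * f x) has_derivative (\<lambda>h. (c *\<^sub>R g x) \<bullet> h)) (at x)" for x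
    using has_derivative_mult_right[OF a1(1), of c] by simp
  moreover have "((\<lambda>x. c *\<^sub>R g x) has_derivative (\<lambda>h. (c *\<^sub>R H x) *v h)) (at x)" for x
    using has_derivative_scaleR_right[OF a1(2), of c] by (simp add: mv_scale)
  moreover have "continuous_on UNIV (\<lambda>x. c *\<^sub>R H x)"
    using assms unfolding C2w_def by (intro continuous_on_scaleR continuous_on_const) auto
  ultimately show ?thesis unfolding C2w_def by blast
qed

lemma C2w_sum: assumes "finite S" "\<And>j. j \<in> S \<Longrightarrow> C2w (f j) (g j) (H j)"
  shows "C2w (\<lambda>x. \<Sum>j\<in>S. f j x) (\<lambda>x. \<Sum>j\<in>S. g j x) (\<lambda>x. \<Sum>j\<in>S. H j x)"
  using assms
proof (induction S rule: finite_induct)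
  case empty
  then show ?case using C2w_const[of 0] by simp
next
  case (insert a F)
  then show ?case using C2w_add[of "f a" "g a" "H a"] by simp
qed

lemma C2w_comp:
  assumes G1: "\<And>s. (G has_real_derivative G1 s) (at s)"
    and G2: "\<And>s. (G1 has_real_derivative G2 s) (at s)"
    and G2c: "continuous_on UNIV G2"
    and f: "C2w f g H"
  shows "C2w (\<lambda>x. G (f x)) (\<lambda>x. G1 (f x) *\<^sub>R g x) (\<lambda>x. G2 (f x) *\<^sub>R outer (g x) (g x) + G1 (f x) *\<^sub>R H x)"
proof -
  have fd: "\<And>x. (f has_derivative (\<lambda>h. g x \<bullet> h)) (at x)" and gd: "\<And>x. (g has_derivative (\<lambda>h. H x *v h)) (at x)"
    and Hc: "continuous_on UNIV H" using f unfolding C2w_def by auto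
  have fc: "continuous_on UNIV f" and gc: "continuous_on UNIV g" using C2w_cont_f C2w_cont_g f by auto
  have G1c: "continuous_on UNIV G1"
    by (metis G2 DERIV_isCont continuous_at_imp_continuous_on)
  have d1: "((\<lambda>x. G (f x)) has_derivative (\<lambda>h. (G1 (f x) *\<^sub>R g x) \<bullet> h)) (at x)" for x
  proof -
    have "((\<lambda>x. G (f x)) has_derivative (\<lambda>h. G1 (f x) * (g x \<bullet> h))) (at x)"
      using has_derivative_compose[OF fd has_field_derivative_imp_has_derivative[OF G1]] .
    then show ?thesis by simp
  qed
  have d2: "((\<lambda>x. G1 (f x) *\<^sub>R g x) has_derivative
      (\<lambda>h. (G2 (f x) *\<^sub>R outer (g x) (g x) + G1 (f x) *\<^sub>R H x) *v h)) (at x)" for x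
  proof -
    have a: "((\<lambda>x. G1 (f x)) has_derivative (\<lambda>h. G2 (f x) * (g x \<bullet> h))) (at x)"
      using has_derivative_compose[OF fd has_field_derivative_imp_has_derivative[OF G2]] .
    have "((\<lambda>x. G1 (f x) *\<^sub>R g x) has_derivative (\<lambda>h. G1 (f x) *\<^sub>R (H x *v h) + (G2 (f x) * (g x \<bullet> h)) *\<^sub>R g x)) (at x)"
      using has_derivative_scaleR[OF a gd] .
    then show ?thesis by (simp add: mv_add mv_scale outer_mv add.commute)
  qed
  have c: "continuous_on UNIV (\<lambda>x. G2 (f x) *\<^sub>R outer (g x) (g x) + G1 (f x) *\<^sub>R H x)"
    by (intro continuous_intros continuous_on_compose2[OF G2c fc] continuous_on_compose2[OF G1c fc] gc Hc) auto
  show ?thesis unfolding C2w_def using d1 d2 c by blast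
qed


lemma HG_nth: "HG g x $ i = g x \<bullet> hfield i x"
  unfolding HG_def by simp

lemma HH_nth: "HH g H x $ i $ j = (H x *v hfield i x) \<bullet> hfield j x + g x \<bullet> dfield j (hfield i x)"
  unfolding HH_def by simp

lemma HG_const: "HG (\<lambda>_. 0) x $ i = 0" by (simp add: HG_nth)
lemma HH_const: "HH (\<lambda>_. 0) (\<lambda>_. 0) x $ i $ j = 0" by (simp add: HH_nth)

lemma HG_lin: "HG (\<lambda>_. a) x $ i = a \<bullet> hfield i x" by (simp add: HG_nth)
lemma HH_lin: "HH (\<lambda>_. a) (\<lambda>_. 0) x $ i $ j = a \<bullet> dfield j (hfield i x)" by (simp add: HH_nth)

lemma HG_add: "HG (\<lambda>x. g1 x + g2 x) x $ i = HG g1 x $ i + HG g2 x $ i"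
  by (simp add: HG_nth inner_add_left)
lemma HH_add: "HH (\<lambda>x. g1 x + g2 x) (\<lambda>x. H1 x + H2 x) x $ i $ j = HH g1 H1 x $ i $ j + HH g2 H2 x $ i $ j"
  by (simp add: HH_nth inner_add_left mv_add)

lemma HG_scale: "HG (\<lambda>x. c *\<^sub>R g x) x $ i = c * HG g x $ i"
  by (simp add: HG_nth)
lemma HH_scale: "HH (\<lambda>x. c *\<^sub>R g x) (\<lambda>x. c *\<^sub>R H x) x $ i $ j = c * HH g H x $ i $ j"
  by (simp add: HH_nth mv_scale algebra_simps)

lemma HG_sum: "finite S \<Longrightarrow> HG (\<lambda>x. \<Sum>k\<in>S. g k x) x $ i = (\<Sum>k\<in>S. HG (g k) x $ i)"
  by (simp add: HG_nth inner_sum_left)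
lemma HH_sum: "finite S \<Longrightarrow> HH (\<lambda>x. \<Sum>k\<in>S. g k x) (\<lambda>x. \<Sum>k\<in>S. H k x) x $ i $ j = (\<Sum>k\<in>S. HH (g k) (H k) x $ i $ j)"
  by (simp add: HH_nth inner_sum_left mv_sum sum.distrib)

lemma HG_comp: "HG (\<lambda>x. G1 (f x) *\<^sub>R g x) x $ i = G1 (f x) * HG g x $ i"
  by (simp add: HG_nth)
lemma HH_comp: "HH (\<lambda>x. G1 (f x) *\<^sub>R g x) (\<lambda>x. G2 (f x) *\<^sub>R outer (g x) (g x) + G1 (f x) *\<^sub>R H x) x $ i $ j
   = G2 (f x) * (HG g x $ i * HG g x $ j) + G1 (f x) * HH g H x $ i $ j"
  by (simp add: HH_nth HG_nth mv_add mv_scale outer_mv inner_add_left algebra_simps)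


definition emb :: "('d::finite) + 'd \<Rightarrow> 'd + 'd + unit" where
  "emb i = (case i of Inl k \<Rightarrow> Inl k | Inr k \<Rightarrow> Inr (Inl k))"

definition Jv :: "('d::finite) hz \<Rightarrow> 'd hz" where
  "Jv v = (\<chi> i. case i of Inl k \<Rightarrow> v $ Inr k | Inr k \<Rightarrow> - v $ Inl k)"

definition Jm :: "('d::finite) + 'd \<Rightarrow> 'd + 'd \<Rightarrow> real" where
  "Jm i j = (case j of Inl k \<Rightarrow> (if i = Inr k then 1 else 0) | Inr k \<Rightarrow> (if i = Inl k then -1 else 0))"

lemma ax_inner: "axis k 1 \<bullet> v = v $ k"
  by (simp add: inner_axis')

lemma emb_inj: "emb i = emb j \<longleftrightarrow> i = j"
  by (cases i; cases j) (auto simp: emb_def)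

lemma emb_ne_tt: "emb i \<noteq> Inr (Inr ())"
  by (cases i) (auto simp: emb_def)

lemma hf_emb: "hfield i x $ emb j = (if i = j then 1 else 0)"
  by (cases i; cases j) (auto simp: hfield_def emb_def axis_def)

lemma hf_tt: "hfield i x $ Inr (Inr ()) = 2 * Jv (hproj x) $ i"
  by (cases i) (auto simp: hfield_def Jv_def hproj_def axis_def)

lemma df_emb: "dfield j h $ emb i = 0"
  by (cases i; cases j) (auto simp: dfield_def emb_def axis_def et_def)

lemma df_tt: "dfield j (hfield i x) $ Inr (Inr ()) = 2 * Jm i j"
  by (cases i; cases j) (auto simp: dfield_def hfield_def Jm_def axis_def et_def)

lemma hproj_nth: "hproj x $ i = x $ emb i"
  by (cases i) (auto simp: hproj_def emb_def)

lemma tcoord_inner: "tcoord x = axis (Inr (Inr ())) 1 \<bullet> x"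
  by (simp add: tcoord_def ax_inner)

lemma C2w_sqlin: fixes a :: "real^'n::finite"
  shows "C2w (\<lambda>x. (a \<bullet> x)^2) (\<lambda>x. (2 * (a \<bullet> x)) *\<^sub>R a) (\<lambda>_. 2 *\<^sub>R outer a a)"
proof -
  have d1: "((\<lambda>s::real. s^2) has_real_derivative 2 * s) (at s)" for s
    by (auto intro!: derivative_eq_intros)
  have d2: "((\<lambda>s::real. 2 * s) has_real_derivative 2) (at s)" for s
    by (auto intro!: derivative_eq_intros)
  have c: "continuous_on UNIV (\<lambda>s::real. 2::real)" by (rule continuous_on_const)
  from C2w_comp[OF d1 d2 c C2w_lin[of a]] show ?thesis by simp
qed

definition mfun :: "('d::finite) pt \<Rightarrow> real" where
  "mfun x = (\<Sum>j\<in>UNIV. (axis (emb j) 1 \<bullet> x)^2)"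
definition gm :: "('d::finite) pt \<Rightarrow> 'd pt" where
  "gm x = (\<Sum>j\<in>UNIV. (2 * (axis (emb j) 1 \<bullet> x)) *\<^sub>R axis (emb j) 1)"
definition Hm :: "('d::finite) pt \<Rightarrow> real^('d+'d+unit)^('d+'d+unit)" where
  "Hm x = (\<Sum>j\<in>UNIV. 2 *\<^sub>R outer (axis (emb j) 1) (axis (emb j) 1))"

lemma C2w_m: "C2w mfun gm Hm"
  unfolding mfun_def gm_def Hm_def
  by (rule C2w_sum[where f="\<lambda>j x. (axis (emb j) 1 \<bullet> x)^2"]) (auto intro: C2w_sqlin)

lemma mfun_norm: "mfun x = (norm (hproj x))^2"
proof -
  have "mfun x = (\<Sum>j\<in>UNIV. (x $ emb j)^2)" by (simp add: mfun_def ax_inner)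
  also have "\<dots> = hproj x \<bullet> hproj x" by (simp add: inner_vec_def hproj_nth power2_eq_square)
  finally show ?thesis by (simp add: power2_norm_eq_inner)
qed

lemma HG_m: "HG gm x $ i = 2 * hproj x $ i"
proof -
  have "HG gm x $ i = (\<Sum>j\<in>UNIV. 2 * x $ emb j * (if i = j then 1 else 0))"
    unfolding HG_nth gm_def by (simp add: inner_sum_left ax_inner hf_emb)
  also have "\<dots> = 2 * x $ emb i" by (simp add: if_distrib cong: if_cong)
  finally show ?thesis by (simp add: hproj_nth)
qed

lemma HH_m: "HH gm Hm x $ i $ j = (if i = j then 2 else 0)"
proof -
  have "HH gm Hm x $ i $ j = (\<Sum>k\<in>UNIV. 2 * ((if i = k then 1 else 0) * (if j = k then 1 else 0)))"
    unfolding HH_nth gm_def Hm_def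
    by (simp add: inner_sum_left mv_sum ax_inner hf_emb df_emb mv_scale outer_mv mult.assoc)
  also have "\<dots> = (\<Sum>k\<in>UNIV. (if k = j then (if i = j then 2 else 0) else 0))"
    by (rule sum.cong) auto
  also have "\<dots> = (if i = j then 2 else 0)" by simp
  finally show ?thesis .
qed


definition Pfun :: "('d::finite) pt \<Rightarrow> real" where
  "Pfun x = (mfun x)^2 + (et \<bullet> x)^2"
definition gP :: "('d::finite) pt \<Rightarrow> 'd pt" where
  "gP x = (2 * mfun x) *\<^sub>R gm x + (2 * (et \<bullet> x)) *\<^sub>R et"
definition HP :: "('d::finite) pt \<Rightarrow> real^('d+'d+unit)^('d+'d+unit)" where
  "HP x = (2 *\<^sub>R outer (gm x) (gm x) + (2 * mfun x) *\<^sub>R Hm x) + 2 *\<^sub>R outer et et"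

lemma C2w_P: "C2w Pfun gP HP"
proof -
  have d1: "((\<lambda>s::real. s^2) has_real_derivative 2 * s) (at s)" for s
    by (auto intro!: derivative_eq_intros)
  have d2: "((\<lambda>s::real. 2 * s) has_real_derivative 2) (at s)" for s
    by (auto intro!: derivative_eq_intros)
  have c: "continuous_on UNIV (\<lambda>s::real. 2::real)" by (rule continuous_on_const)
  have A: "C2w (\<lambda>x. (mfun x)^2) (\<lambda>x. (2 * mfun x) *\<^sub>R gm x) (\<lambda>x. 2 *\<^sub>R outer (gm x) (gm x) + (2 * mfun x) *\<^sub>R Hm x)"
    using C2w_comp[OF d1 d2 c C2w_m] by simp
  show ?thesis unfolding Pfun_def gP_def HP_def using C2w_add[OF A C2w_sqlin[of et]] by simp
qed

lemma et_tt: "et \<bullet> x = x $ Inr (Inr ())"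
  by (simp add: et_def ax_inner)

lemma Pfun_eq: "Pfun x = (norm (hproj x))^4 + (tcoord x)^2"
  by (simp add: Pfun_def mfun_norm et_tt tcoord_def power_mult[symmetric])

lemma heta_eq: "heta x $ i = mfun x * hproj x $ i + tcoord x * Jv (hproj x) $ i"
  by (cases i) (auto simp: heta_def mfun_norm hproj_def Jv_def tcoord_def algebra_simps)

lemma HG_P: "HG gP x $ i = 4 * heta x $ i"
proof -
  have "HG gP x $ i = 2 * mfun x * (2 * hproj x $ i) + 2 * (et \<bullet> x) * (et \<bullet> hfield i x)"
    unfolding gP_def HG_add HG_scale using HG_m[of x i] by (simp add: HG_nth)
  also have "\<dots> = 4 * (mfun x * hproj x $ i + tcoord x * Jv (hproj x) $ i)"
    by (simp add: et_tt hf_tt tcoord_def algebra_simps)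
  finally show ?thesis by (simp add: heta_eq)
qed

lemma HH_P: "HH gP HP x $ i $ j = 8 * (hproj x $ i * hproj x $ j) + 4 * mfun x * (if i = j then 1 else 0)
   + 8 * (Jv (hproj x) $ i * Jv (hproj x) $ j) + 4 * tcoord x * Jm i j"
proof -
  have e1: "HH (\<lambda>x. (2 * mfun x) *\<^sub>R gm x) (\<lambda>x. 2 *\<^sub>R outer (gm x) (gm x) + (2 * mfun x) *\<^sub>R Hm x) x $ i $ j
     = 2 * (HG gm x $ i * HG gm x $ j) + 2 * mfun x * HH gm Hm x $ i $ j"
    using HH_comp[of "\<lambda>s. 2 * s" mfun gm "\<lambda>s. 2" Hm x i j] by simp
  have e2: "HH (\<lambda>x. (2 * (et \<bullet> x)) *\<^sub>R et) (\<lambda>_. 2 *\<^sub>R outer et et) x $ i $ j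
     = 2 * ((et \<bullet> hfield i x) * (et \<bullet> hfield j x)) + 2 * (et \<bullet> x) * (et \<bullet> dfield j (hfield i x))"
    by (simp add: HH_nth mv_scale outer_mv)
  have "HH gP HP x $ i $ j = HH (\<lambda>x. (2 * mfun x) *\<^sub>R gm x) (\<lambda>x. 2 *\<^sub>R outer (gm x) (gm x) + (2 * mfun x) *\<^sub>R Hm x) x $ i $ j
     + HH (\<lambda>x. (2 * (et \<bullet> x)) *\<^sub>R et) (\<lambda>_. 2 *\<^sub>R outer et et) x $ i $ j"
    unfolding gP_def HP_def by (rule HH_add)
  also have "\<dots> = 8 * (hproj x $ i * hproj x $ j) + 4 * mfun x * (if i = j then 1 else 0)
   + 8 * (Jv (hproj x) $ i * Jv (hproj x) $ j) + 4 * tcoord x * Jm i j"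
    unfolding e1 e2 HG_m HH_m by (simp add: et_tt hf_tt df_tt tcoord_def algebra_simps)
  finally show ?thesis .
qed



definition qf :: "real^'n^'n \<Rightarrow> real^('n::finite) \<Rightarrow> real^'n \<Rightarrow> real" where
  "qf A u v = u \<bullet> (A *v v)"

lemma qf_sum: "qf A u v = (\<Sum>i\<in>UNIV. \<Sum>j\<in>UNIV. A$i$j * u$i * v$j)"
  unfolding qf_def inner_vec_def matrix_vector_mult_def
  by (simp add: sum_distrib_left mult_ac)

lemma qf_add1: "qf A (u + w) v = qf A u v + qf A w v" by (simp add: qf_def inner_add_left)
lemma qf_add2: "qf A u (v + w) = qf A u v + qf A u w" by (simp add: qf_def matrix_vector_right_distrib inner_add_right)
lemma qf_diff1: "qf A (u - w) v = qf A u v - qf A w v" by (simp add: qf_def inner_diff_left)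
lemma qf_diff2: "qf A u (v - w) = qf A u v - qf A u w" by (simp add: qf_def matrix_vector_mult_diff_distrib inner_diff_right)
lemma qf_scale1: "qf A (c *\<^sub>R u) v = c * qf A u v" by (simp add: qf_def)
lemma qf_scale2: "qf A u (c *\<^sub>R v) = c * qf A u v" by (simp add: qf_def matrix_vector_mult_scaleR)

lemma qf_sym: assumes "transpose A = A" shows "qf A u v = qf A v u"
proof -
  have s: "A$i$j = A$j$i" for i j
  proof -
    have "(transpose A)$i$j = A$j$i" by (simp add: transpose_def)
    then show ?thesis using assms by simp
  qed
  have "qf A u v = (\<Sum>i\<in>UNIV. \<Sum>j\<in>UNIV. A$j$i * v$j * u$i)" unfolding qf_sum
    by (intro sum.cong refl) (simp add: s mult.commute mult.left_commute)
  also have "\<dots> = qf A v u" unfolding qf_sum by (rule sum.swap)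
  finally show ?thesis .
qed

lemma adm_sym: "pucci_adm l L A \<Longrightarrow> transpose A = A"
  by (simp add: pucci_adm_def)

lemma adm_entry_sym: assumes "pucci_adm l L A" shows "A$i$j = A$j$i"
proof -
  have "(transpose A)$i$j = A$j$i" by (simp add: transpose_def)
  then show ?thesis using adm_sym[OF assms] by simp
qed

lemma adm_lo: "pucci_adm l L A \<Longrightarrow> l * (norm u)^2 \<le> qf A u u"
  by (simp add: pucci_adm_def qf_def)

lemma adm_hi: "pucci_adm l L A \<Longrightarrow> qf A u u \<le> L * (norm u)^2"
  by (simp add: pucci_adm_def qf_def)

lemma qf_axis: "qf A (axis i 1) (axis j 1) = A$i$j"
  by (simp add: qf_def inner_axis' matrix_vector_mult_basis column_def)

lemma trace_qf: "trace A = (\<Sum>i\<in>UNIV. qf A (axis i 1) (axis i 1))"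
  by (simp add: trace_def qf_axis)


lemma qf_axis_left: "qf A (axis k 1) w = (A *v w) $ k"
  by (simp add: qf_def inner_axis')

lemma sum_comp_qf: "(\<Sum>k\<in>UNIV. u$k * (A *v w)$k) = qf A u w"
  by (simp add: qf_def inner_vec_def)

lemma qf_zero1: "qf A 0 w = 0" by (simp add: qf_def)

lemma proj_trace:
  fixes A :: "real^'n^'n" and u v :: "real^('n::finite)"
  assumes adm: "pucci_adm l L A" and uv: "u \<bullet> v = 0" and uu: "u \<bullet> u = m" and vv: "v \<bullet> v = m"
  shows "m * trace A \<le> (real CARD('n) - 2) * L * m + qf A u u + qf A v v"
proof -
  define w where "w k = m *\<^sub>R axis k 1 - u$k *\<^sub>R u - v$k *\<^sub>R v" for k
  have sy: "qf A a b = qf A b a" for a b using qf_sym[OF adm_sym[OF adm]] by blast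
  have qk: "qf A (w k) (w k) = m*m * A$k$k - 2*m*u$k * (A *v u)$k - 2*m* v$k * (A *v v)$k
       + u$k*u$k * qf A u u + 2*u$k* v$k * qf A u v + v$k* v$k * qf A v v" for k
  proof -
    have a1: "qf A u (axis k 1) = (A *v u)$k" using sy qf_axis_left by metis
    have a2: "qf A v (axis k 1) = (A *v v)$k" using sy qf_axis_left by metis
    have a3: "qf A v u = qf A u v" using sy by metis
    show ?thesis unfolding w_def qf_diff1 qf_diff2 qf_scale1 qf_scale2 qf_axis
      unfolding qf_axis_left a1 a2 a3 by (simp add: algebra_simps)
  qed
  have nk: "w k \<bullet> w k = m*m - m * (u$k*u$k) - m*(v$k* v$k)" for k
  proof -
    have "u \<bullet> axis k 1 = u$k" "v \<bullet> axis k 1 = v$k" "axis k 1 \<bullet> u = u$k" "axis k 1 \<bullet> v = v$k"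
      "axis k 1 \<bullet> (axis k 1::real^'n) = 1" "v \<bullet> u = 0"
      using uv by (auto simp: inner_axis inner_axis' inner_commute)
    then show ?thesis unfolding w_def
      by (simp add: inner_diff_left inner_diff_right uu vv uv algebra_simps)
  qed
  have "(\<Sum>k\<in>UNIV. qf A (w k) (w k)) = m*m * trace A - 2*m* qf A u u - 2*m* qf A v v
        + m * qf A u u + 2 * (u \<bullet> v) * qf A u v + m * qf A v v"
  proof -
    have s1: "(\<Sum>k\<in>UNIV. u$k*u$k) = m" "(\<Sum>k\<in>UNIV. v$k* v$k) = m" "(\<Sum>k\<in>UNIV. u$k* v$k) = u \<bullet> v"
      using uu vv by (auto simp: inner_vec_def)
    have s2: "(\<Sum>k\<in>UNIV. 2*m*u$k * (A *v u)$k) = 2*m*qf A u u"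
             "(\<Sum>k\<in>UNIV. 2*m* v$k * (A *v v)$k) = 2*m*qf A v v"
      by (simp_all add: sum_comp_qf[symmetric] sum_distrib_left mult.assoc)
    have s3: "(\<Sum>k\<in>UNIV. m*m * A$k$k) = m*m*trace A" by (simp add: trace_def sum_distrib_left)
    have s4: "(\<Sum>k\<in>UNIV. u$k*u$k * qf A u u) = m * qf A u u"
             "(\<Sum>k\<in>UNIV. 2*u$k* v$k * qf A u v) = 2 * (u \<bullet> v) * qf A u v"
             "(\<Sum>k\<in>UNIV. v$k* v$k * qf A v v) = m * qf A v v"
    proof -
      have "(\<Sum>k\<in>UNIV. u$k*u$k * qf A u u) = (\<Sum>k\<in>UNIV. u$k*u$k) * qf A u u" by (rule sum_distrib_right[symmetric])
      moreover have "(\<Sum>k\<in>UNIV. 2*u$k* v$k * qf A u v) = (\<Sum>k\<in>UNIV. u$k* v$k) * (2 * qf A u v)"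
        unfolding sum_distrib_right by (rule sum.cong) (simp_all add: mult_ac)
      moreover have "(\<Sum>k\<in>UNIV. v$k* v$k * qf A v v) = (\<Sum>k\<in>UNIV. v$k* v$k) * qf A v v" by (rule sum_distrib_right[symmetric])
      ultimately show "(\<Sum>k\<in>UNIV. u$k*u$k * qf A u u) = m * qf A u u"
             "(\<Sum>k\<in>UNIV. 2*u$k* v$k * qf A u v) = 2 * (u \<bullet> v) * qf A u v"
             "(\<Sum>k\<in>UNIV. v$k* v$k * qf A v v) = m * qf A v v" using s1 by simp_all
    qed
    show ?thesis unfolding qk using s2 s3 s4 by (simp add: sum.distrib sum_subtractf)
  qed
  also have "\<dots> = m*m * trace A - m * (qf A u u + qf A v v)" using uv by (simp add: algebra_simps)
  finally have E1: "(\<Sum>k\<in>UNIV. qf A (w k) (w k)) = m*m * trace A - m * (qf A u u + qf A v v)" .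
  have E2: "(\<Sum>k\<in>UNIV. w k \<bullet> w k) = real CARD('n) * (m*m) - 2*m*m"
  proof -
    have "(\<Sum>k\<in>UNIV. w k \<bullet> w k) = (\<Sum>k\<in>(UNIV::'n set). m*m) - m * (\<Sum>k\<in>UNIV. u$k*u$k) - m*(\<Sum>k\<in>UNIV. v$k* v$k)"
      unfolding nk by (simp add: sum_subtractf sum_distrib_left)
    also have "\<dots> = real CARD('n) * (m*m) - 2*m*m" using uu vv by (simp add: inner_vec_def)
    finally show ?thesis .
  qed
  have "(\<Sum>k\<in>UNIV. qf A (w k) (w k)) \<le> (\<Sum>k\<in>UNIV. L * (w k \<bullet> w k))"
    by (rule sum_mono) (use adm_hi[OF adm] in \<open>simp add: power2_norm_eq_inner\<close>)
  then have M: "m*m * trace A - m * (qf A u u + qf A v v) \<le> L * (real CARD('n) * (m*m) - 2*m*m)"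
    unfolding E1 sum_distrib_left[symmetric] E2 .
  show ?thesis
  proof (cases "m = 0")
    case True
    then have "u = 0" "v = 0" using uu vv by auto
    then show ?thesis using True by (simp add: qf_zero1)
  next
    case False
    then have mp: "m > 0" using uu by (metis inner_ge_zero order_le_less)
    have "m * (m * trace A) \<le> m * ((real CARD('n) - 2) * L * m + qf A u u + qf A v v)"
      using M by (simp add: algebra_simps)
    then show ?thesis using mp by simp
  qed
qed


lemma sum_UNIV_plus: "(\<Sum>i\<in>(UNIV::('a::finite + 'b::finite) set). f i) = (\<Sum>k\<in>UNIV. f (Inl k)) + (\<Sum>k\<in>UNIV. f (Inr k))"
  using sum.Plus[of "UNIV::'a set" "UNIV::'b set" f] by (simp add: o_def)

lemma card_plus: "CARD('a::finite + 'a) = 2 * CARD('a)"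
  using card_Plus[of "UNIV::'a set" "UNIV::'a set"] by simp

lemma Jv_nth: "Jv v $ Inl k = v $ Inr k" "Jv v $ Inr k = - v $ Inl k"
  by (simp_all add: Jv_def)

lemma Jv_zero: "Jv 0 = 0"
  by (simp add: vec_eq_iff Jv_def split: sum.split)

lemma Jv_Jv: "Jv (Jv v) = - v"
  by (simp add: vec_eq_iff Jv_def split: sum.splits)

lemma Jv_lin: "Jv (a *\<^sub>R v + b *\<^sub>R w) = a *\<^sub>R Jv v + b *\<^sub>R Jv w"
  by (simp add: vec_eq_iff Jv_def split: sum.splits)

lemma Jv_inner: "Jv v \<bullet> Jv w = v \<bullet> w"
  by (simp add: inner_vec_def sum_UNIV_plus Jv_nth add.commute)

lemma Jv_orth: "v \<bullet> Jv v = 0"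
  by (simp add: inner_vec_def sum_UNIV_plus Jv_nth sum_negf mult.commute)

lemma key_ineq:
  fixes x :: "('d::finite) hz" and t :: real
  assumes adm: "pucci_adm l L A"
  defines "m \<equiv> x \<bullet> x" and "jx \<equiv> Jv x"
  defines "\<eta> \<equiv> m *\<^sub>R x + t *\<^sub>R jx" and "P \<equiv> m^2 + t^2"
  shows "-4 * qf A \<eta> \<eta> + P * (2 * qf A x x + m * trace A + 2 * qf A jx jx)
         \<le> ((2 * real CARD('d) + 1) * L - l) * m * P"
proof -
  have sy: "qf A a b = qf A b a" for a b using qf_sym[OF adm_sym[OF adm]] by blast
  define J\<eta> where "J\<eta> = Jv \<eta>"
  have Je: "J\<eta> = m *\<^sub>R jx + (- t) *\<^sub>R x"
    unfolding J\<eta>_def \<eta>_def jx_def Jv_lin Jv_Jv by simp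
  have jj: "jx \<bullet> jx = m" unfolding jx_def m_def by (rule Jv_inner)
  have xj: "x \<bullet> jx = 0" unfolding jx_def by (rule Jv_orth)
  have jxx: "jx \<bullet> x = 0" using xj by (simp add: inner_commute)
  have hs: "qf A \<eta> \<eta> + qf A J\<eta> J\<eta> = P * (qf A x x + qf A jx jx)"
    unfolding Je \<eta>_def P_def
    by (simp add: qf_add1 qf_add2 qf_diff1 qf_diff2 qf_scale1 qf_scale2 sy[of jx x] algebra_simps power2_eq_square)
  have n1: "\<eta> \<bullet> \<eta> = m * P"
    unfolding \<eta>_def P_def by (simp add: inner_add_left inner_add_right jj xj jxx m_def[symmetric] algebra_simps power2_eq_square)
  have n2: "J\<eta> \<bullet> J\<eta> = m * P"
    unfolding J\<eta>_def by (simp add: Jv_inner n1)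
  have q1: "l * (m * P) \<le> qf A \<eta> \<eta>" using adm_lo[OF adm, of \<eta>] n1 by (simp add: power2_norm_eq_inner)
  have q2: "qf A J\<eta> J\<eta> \<le> L * (m * P)" using adm_hi[OF adm, of J\<eta>] n2 by (simp add: power2_norm_eq_inner)
  have pr: "m * trace A \<le> (real CARD('d + 'd) - 2) * L * m + qf A x x + qf A jx jx"
  proof -
    have "x \<bullet> x = m" unfolding m_def ..
    then show ?thesis by (rule proj_trace[OF adm xj _ jj])
  qed
  have cd: "real CARD('d + 'd) = 2 * real CARD('d)" using card_plus[where 'a='d] by simp
  have P0: "P \<ge> 0" unfolding P_def by simp
  have "P * (m * trace A) \<le> P * ((2 * real CARD('d) - 2) * L * m + qf A x x + qf A jx jx)"
    using mult_left_mono[OF pr P0] cd by simp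
  then have "-4 * qf A \<eta> \<eta> + P * (2 * qf A x x + m * trace A + 2 * qf A jx jx)
     \<le> -4 * qf A \<eta> \<eta> + 3 * (P * (qf A x x + qf A jx jx)) + (2 * real CARD('d) - 2) * L * m * P"
    by (simp add: algebra_simps)
  also have "\<dots> = - qf A \<eta> \<eta> + 3 * qf A J\<eta> J\<eta> + (2 * real CARD('d) - 2) * L * m * P"
    unfolding hs[symmetric] by simp
  also have "\<dots> \<le> - (l * (m * P)) + 3 * (L * (m * P)) + (2 * real CARD('d) - 2) * L * m * P"
    using q1 q2 by linarith
  also have "\<dots> = ((2 * real CARD('d) + 1) * L - l) * m * P" by (simp add: algebra_simps)
  finally show ?thesis .
qed


lemma trace_neg: "trace (- M) = - trace (M::real^'n::finite^'n)"
  by (simp add: trace_def sum_negf)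

lemma trace_symm:
  assumes "transpose A = A"
  shows "trace (A ** symm X) = (\<Sum>i\<in>UNIV. \<Sum>j\<in>UNIV. A$i$j * X$i$j)"
proof -
  have s: "A$i$j = A$j$i" for i j
  proof -
    have "(transpose A)$i$j = A$j$i" by (simp add: transpose_def)
    then show ?thesis using assms by simp
  qed
  have e: "(symm X)$k$i = (X$k$i + X$i$k) / 2" for k i
    by (simp add: symm_def transpose_def)
  have "trace (A ** symm X) = (\<Sum>i\<in>UNIV. \<Sum>k\<in>UNIV. A$i$k * ((X$k$i + X$i$k) / 2))"
    by (simp add: trace_def matrix_matrix_mult_def e)
  also have "\<dots> = (\<Sum>i\<in>UNIV. \<Sum>k\<in>UNIV. A$i$k * X$k$i / 2 + A$i$k * X$i$k / 2)"
    by (intro sum.cong refl) (simp add: field_simps)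
  also have "\<dots> = (\<Sum>i\<in>UNIV. \<Sum>k\<in>UNIV. A$i$k * X$k$i) / 2 + (\<Sum>i\<in>UNIV. \<Sum>k\<in>UNIV. A$i$k * X$i$k) / 2"
    by (simp add: sum.distrib sum_divide_distrib)
  also have "(\<Sum>i\<in>UNIV. \<Sum>k\<in>UNIV. A$i$k * X$k$i) = (\<Sum>k\<in>UNIV. \<Sum>i\<in>UNIV. A$k$i * X$k$i)"
    by (subst sum.swap) (simp add: s)
  finally show ?thesis by simp
qed

lemma Jm_anti: "Jm j i = - Jm i j"
  by (cases i; cases j) (auto simp: Jm_def)

lemma sum_Jm:
  fixes A :: "real^('d::finite+'d)^('d+'d)"
  assumes "transpose A = A"
  shows "(\<Sum>i\<in>UNIV. \<Sum>j\<in>UNIV. A$i$j * Jm i j) = 0"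
proof -
  have s: "A$i$j = A$j$i" for i j
  proof -
    have "(transpose A)$i$j = A$j$i" by (simp add: transpose_def)
    then show ?thesis using assms by simp
  qed
  let ?S = "(\<Sum>i\<in>UNIV. \<Sum>j\<in>UNIV. A$i$j * Jm i j)"
  have "?S = (\<Sum>j\<in>UNIV. \<Sum>i\<in>UNIV. A$i$j * Jm i j)" by (rule sum.swap)
  also have "\<dots> = (\<Sum>j\<in>UNIV. \<Sum>i\<in>UNIV. - (A$j$i * Jm j i))"
  proof (intro sum.cong refl)
    fix i j :: "'d + 'd"
    have "Jm i j = - Jm j i" using Jm_anti[of i j] by simp
    then show "A$i$j * Jm i j = - (A$j$i * Jm j i)" using s[of i j] by simp
  qed
  also have "\<dots> = - ?S" by (simp add: sum_negf)
  finally show ?thesis by simp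
qed

lemma sum_qf: "(\<Sum>i\<in>UNIV. \<Sum>j\<in>UNIV. A$i$j * (u$i * v$j)) = qf A u v"
  by (simp add: qf_sum mult.assoc)

lemma sum_delta_tr: "(\<Sum>i\<in>UNIV. \<Sum>j\<in>UNIV. A$i$j * (if i = j then 1 else 0)) = trace A"
  by (simp add: trace_def if_distrib cong: if_cong)

lemma adm_exists: assumes "0 < l" "l \<le> L" shows "pucci_adm l L (l *\<^sub>R mat 1 :: real^'n::finite^'n)"
proof -
  have t: "transpose (l *\<^sub>R mat 1 :: real^'n^'n) = l *\<^sub>R mat 1"
    by (simp add: transpose_def mat_def vec_eq_iff)
  have q: "\<xi> \<bullet> ((l *\<^sub>R mat 1 :: real^'n^'n) *v \<xi>) = l * (norm \<xi>)^2" for \<xi> :: "real^'n"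
    by (simp add: mv_scale power2_norm_eq_inner)
  have "l * (norm \<xi>)^2 \<le> L * (norm \<xi>)^2" for \<xi> :: "real^'n"
    using assms by (intro mult_right_mono) auto
  then show ?thesis unfolding pucci_adm_def using t q by simp
qed

lemma pucci_minus_ge:
  assumes "0 < l" "l \<le> L" "\<And>A. pucci_adm l L A \<Longrightarrow> \<beta> \<le> trace (- (A ** X))"
  shows "\<beta> \<le> pucci_minus l L X"
  unfolding pucci_minus_def
proof (rule cINF_greatest)
  show "{A. pucci_adm l L A} \<noteq> {}" using adm_exists[OF assms(1,2)] by blast
qed (use assms(3) in auto)

lemma inf_ge: "(\<And>\<alpha>. \<beta> \<le> f \<alpha>) \<Longrightarrow> \<beta> \<le> (INF \<alpha>. f \<alpha> :: real)"
  by (rule cINF_greatest) auto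

lemma touch:
  assumes sub: "visc_sub (\<lambda>x r p M. pucci_minus l L M + (INF \<alpha>. c \<alpha> x * r - b \<alpha> x \<bullet> p)) u"
    and C: "C2w \<phi> g H" and e: "e > 0" and mx: "\<forall>y\<in>ball x0 e. u y - \<phi> y \<le> u x0 - \<phi> x0"
    and lpos: "0 < l" and lL: "l \<le> L"
    and b1: "\<And>A. pucci_adm l L A \<Longrightarrow> \<beta>1 \<le> trace (- (A ** symm (HH g H x0)))"
    and b2: "\<And>\<alpha>. \<beta>2 \<le> c \<alpha> x0 * u x0 - b \<alpha> x0 \<bullet> HG g x0"
  shows "\<beta>1 + \<beta>2 \<le> 0"
proof -
  have "pucci_minus l L (symm (hhess \<phi> x0)) + (INF \<alpha>. c \<alpha> x0 * u x0 - b \<alpha> x0 \<bullet> hgrad \<phi> x0) \<le> 0"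
    using sub C2w_C2[OF C] e mx unfolding visc_sub_def by blast
  then have "pucci_minus l L (symm (HH g H x0)) + (INF \<alpha>. c \<alpha> x0 * u x0 - b \<alpha> x0 \<bullet> HG g x0) \<le> 0"
    using hgrad_C2w[OF C] hhess_C2w[OF C] by simp
  moreover have "\<beta>1 \<le> pucci_minus l L (symm (HH g H x0))" by (rule pucci_minus_ge[OF lpos lL b1])
  moreover have "\<beta>2 \<le> (INF \<alpha>. c \<alpha> x0 * u x0 - b \<alpha> x0 \<bullet> HG g x0)" by (rule inf_ge[OF b2])
  ultimately show ?thesis by linarith
qed

lemma b_bdd:
  fixes b :: "'a \<Rightarrow> ('d::finite) pt \<Rightarrow> 'd hz"
  assumes Hi_fin: "\<forall>x r p. bdd_below (range (\<lambda>\<alpha>. c \<alpha> x * r - b \<alpha> x \<bullet> p))"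
    and b_lip: "\<forall>R>0. \<exists>K. \<forall>\<alpha> x y. norm x \<le> R \<longrightarrow> norm y \<le> R \<longrightarrow> norm (b \<alpha> x - b \<alpha> y) \<le> K * norm (x - y)"
  shows "\<exists>B. \<forall>\<alpha> x. norm x \<le> R \<longrightarrow> norm (b \<alpha> x) \<le> B"
proof -
  have "\<exists>C. \<forall>\<alpha>. \<bar>b \<alpha> 0 $ i\<bar> \<le> C" for i
  proof -
    from Hi_fin[rule_format, of 0 0 "axis i 1"] obtain C1 where C1: "\<And>\<alpha>. C1 \<le> - (b \<alpha> 0 \<bullet> axis i 1)"
      by (auto simp: bdd_below_def)
    from Hi_fin[rule_format, of 0 0 "- axis i 1"] obtain C2 where C2: "\<And>\<alpha>. C2 \<le> b \<alpha> 0 \<bullet> axis i 1"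
      by (auto simp: bdd_below_def)
    have "\<bar>b \<alpha> 0 $ i\<bar> \<le> max (- C1) (- C2)" for \<alpha>
      using C1[of \<alpha>] C2[of \<alpha>] by (simp add: inner_axis)
    then show ?thesis by blast
  qed
  then obtain C where C: "\<And>i \<alpha>. \<bar>b \<alpha> 0 $ i\<bar> \<le> C i" by metis
  have n0: "norm (b \<alpha> 0) \<le> (\<Sum>i\<in>UNIV. C i)" for \<alpha>
    using norm_le_l1_cart[of "b \<alpha> 0"] sum_mono[of UNIV "\<lambda>i. \<bar>b \<alpha> 0 $ i\<bar>" C] C by force
  define R' where "R' = max R 1"
  have "R' > 0" unfolding R'_def by simp
  then obtain K where K: "\<And>\<alpha> x y. norm x \<le> R' \<Longrightarrow> norm y \<le> R' \<Longrightarrow> norm (b \<alpha> x - b \<alpha> y) \<le> K * norm (x - y)"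
    using b_lip by blast
  have "norm (b \<alpha> x) \<le> (\<Sum>i\<in>UNIV. C i) + \<bar>K\<bar> * R'" if "norm x \<le> R" for \<alpha> x
  proof -
    have x: "norm x \<le> R'" using that unfolding R'_def by simp
    have "norm (b \<alpha> x - b \<alpha> 0) \<le> K * norm x" using K[OF x, of 0 \<alpha>] \<open>R' > 0\<close> by simp
    also have "\<dots> \<le> \<bar>K\<bar> * R'" using x by (meson abs_ge_self abs_ge_zero mult_mono norm_ge_zero order_trans)
    finally have "norm (b \<alpha> x - b \<alpha> 0) \<le> \<bar>K\<bar> * R'" .
    then show ?thesis using n0[of \<alpha>] norm_triangle_sub[of "b \<alpha> x" "b \<alpha> 0"] by linarith
  qed
  then show ?thesis by blast
qed



lemma pw_deriv:
  fixes f g :: "real \<Rightarrow> real"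
  assumes f: "\<And>x. a \<le> x \<Longrightarrow> (f has_real_derivative f' x) (at x)"
    and g: "\<And>x. x \<le> a \<Longrightarrow> (g has_real_derivative g' x) (at x)"
    and c1: "f a = g a" and c2: "f' a = g' a"
  shows "((\<lambda>x. if a \<le> x then f x else g x) has_real_derivative (if a \<le> x then f' x else g' x)) (at x)"
proof -
  have cS: "closure {a..} = {a..}" and cT: "closure {..<a} = {..a}" by simp_all
  have "((\<lambda>x. if x \<in> {a..} then f x else g x) has_vector_derivative
      (if x \<in> {a..} then f' x else g' x)) (at x within UNIV)"
  proof (rule has_vector_derivative_If_within_closures)
    show "x \<in> {a..} \<union> {..<a}" by auto
    show "UNIV = {a..} \<union> {..<a}" by auto
    show "(f has_vector_derivative f' x) (at x within {a..} \<union> closure {a..} \<inter> closure {..<a})"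
      if "x \<in> {a..} \<union> closure {a..} \<inter> closure {..<a}"
      using that f[of x] by (auto simp: has_real_derivative_iff_has_vector_derivative[symmetric] intro: has_field_derivative_at_within)
    show "(g has_vector_derivative g' x) (at x within {..<a} \<union> closure {a..} \<inter> closure {..<a})"
      if "x \<in> {..<a} \<union> closure {a..} \<inter> closure {..<a}"
      using that g[of x] by (auto simp: has_real_derivative_iff_has_vector_derivative[symmetric] intro: has_field_derivative_at_within)
    show "f x = g x" if "x \<in> closure {a..}" "x \<in> closure {..<a}" for x
      using that c1 by auto
    show "f' x = g' x" if "x \<in> closure {a..}" "x \<in> closure {..<a}" for x
      using that c2 by auto
  qed
  then show ?thesis by (simp add: has_real_derivative_iff_has_vector_derivative)
qed

definition Gl :: "real \<Rightarrow> real \<Rightarrow> real" where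
  "Gl a s = (if a \<le> s then ln s else ln a + (s - a) / a - (s - a)^2 / (2 * a^2))"
definition Gl1 :: "real \<Rightarrow> real \<Rightarrow> real" where
  "Gl1 a s = (if a \<le> s then 1 / s else 1 / a - (s - a) / a^2)"
definition Gl2 :: "real \<Rightarrow> real \<Rightarrow> real" where
  "Gl2 a s = - 1 / (max a s)^2"

lemma Gl_deriv: assumes "a > 0" shows "(Gl a has_real_derivative Gl1 a s) (at s)"
proof -
  have "((\<lambda>x. if a \<le> x then ln x else ln a + (x - a) / a - (x - a)^2 / (2 * a^2)) has_real_derivative
       (if a \<le> s then 1 / s else 1 / a - (s - a) / a^2)) (at s)"
  proof (rule pw_deriv)
    show "(ln has_real_derivative 1 / x) (at x)" if "a \<le> x" for x
      using that assms by (auto intro!: derivative_eq_intros simp: field_simps)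
    show "((\<lambda>x. ln a + (x - a) / a - (x - a)^2 / (2 * a^2)) has_real_derivative 1 / a - (x - a) / a^2) (at x)" for x
      using assms by (auto intro!: derivative_eq_intros simp: field_simps power2_eq_square)
  qed auto
  then show ?thesis unfolding Gl_def[abs_def] Gl1_def by simp
qed

lemma Gl1_deriv: assumes "a > 0" shows "(Gl1 a has_real_derivative Gl2 a s) (at s)"
proof -
  have "((\<lambda>x. if a \<le> x then 1 / x else 1 / a - (x - a) / a^2) has_real_derivative
       (if a \<le> s then - 1 / s^2 else - 1 / a^2)) (at s)"
  proof (rule pw_deriv)
    show "((\<lambda>x. 1 / x) has_real_derivative - 1 / x^2) (at x)" if "a \<le> x" for x
      using that assms by (auto intro!: derivative_eq_intros simp: field_simps power2_eq_square)
    show "((\<lambda>x. 1 / a - (x - a) / a^2) has_real_derivative - 1 / a^2) (at x)" for x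
      using assms by (auto intro!: derivative_eq_intros simp: field_simps power2_eq_square)
  qed auto
  moreover have "(if a \<le> s then - 1 / s^2 else - 1 / a^2) = Gl2 a s"
    unfolding Gl2_def by (auto simp: max_def)
  ultimately show ?thesis unfolding Gl1_def[abs_def] by simp
qed

lemma Gl2_cont: assumes "a > 0" shows "continuous_on UNIV (Gl2 a)"
proof -
  have "max a s \<noteq> 0" for s using assms by (auto simp: max_def)
  then show ?thesis unfolding Gl2_def[abs_def] by (intro continuous_intros) auto
qed


lemma Pfun_nonneg: "Pfun x \<ge> 0"
  by (simp add: Pfun_def)

lemma hrho_Pfun: "hrho x = Pfun x powr (1/4)"
  by (simp add: hrho_def Pfun_eq)

lemma hrho4: "hrho x ^ 4 = Pfun x"
proof (cases "Pfun x = 0")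
  case True then show ?thesis by (simp add: hrho_Pfun)
next
  case False
  then have "(Pfun x powr (1/4)) ^ 4 = Pfun x powr (real 4 * (1/4))" by (rule powr_power)
  then show ?thesis using Pfun_nonneg[of x] by (simp add: hrho_Pfun)
qed

lemma ln_hrho: "Pfun x > 0 \<Longrightarrow> ln (hrho x) = ln (Pfun x) / 4"
  by (simp add: hrho_Pfun ln_powr)

lemma mfun_inner: "mfun x = hproj x \<bullet> hproj x"
  by (simp add: mfun_norm power2_norm_eq_inner)

lemma heta_vec: "heta x = mfun x *\<^sub>R hproj x + tcoord x *\<^sub>R Jv (hproj x)"
  by (simp add: vec_eq_iff heta_eq)

lemma Pfun_mt: "Pfun x = (mfun x)^2 + (tcoord x)^2"
  by (simp add: Pfun_def et_tt tcoord_def)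

definition gL where "gL a x = Gl1 a (Pfun x) *\<^sub>R gP x"
definition HL where "HL a x = Gl2 a (Pfun x) *\<^sub>R outer (gP x) (gP x) + Gl1 a (Pfun x) *\<^sub>R HP x"

lemma C2w_L: "a > 0 \<Longrightarrow> C2w (\<lambda>x. Gl a (Pfun x)) (gL a) (HL a)"
  unfolding gL_def[abs_def] HL_def[abs_def]
  by (rule C2w_comp[OF Gl_deriv Gl1_deriv Gl2_cont C2w_P])

lemma HG_L: "HG (gL a) x $ i = Gl1 a (Pfun x) * (4 * heta x $ i)"
  unfolding gL_def[abs_def] HG_comp HG_P ..

lemma HH_L: "HH (gL a) (HL a) x $ i $ j = Gl2 a (Pfun x) * ((4 * heta x $ i) * (4 * heta x $ j)) + Gl1 a (Pfun x) * HH gP HP x $ i $ j"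
  unfolding gL_def[abs_def] HL_def[abs_def] using HH_comp[of "Gl1 a" Pfun gP "Gl2 a" HP x i j] by (simp add: HG_P)

definition gX where "gX k a x = (k * exp (k * (a \<bullet> x))) *\<^sub>R a"
definition HX where "HX k a x = (k * (k * exp (k * (a \<bullet> x)))) *\<^sub>R outer a a + (k * exp (k * (a \<bullet> x))) *\<^sub>R (0::real^'n^'n)"

lemma C2w_X: fixes a :: "real^'n::finite" shows "C2w (\<lambda>x. exp (k * (a \<bullet> x))) (gX k a) (HX k a)"
proof -
  have d1: "((\<lambda>s. exp (k * s)) has_real_derivative k * exp (k * s)) (at s)" for s
    by (auto intro!: derivative_eq_intros)
  have d2: "((\<lambda>s. k * exp (k * s)) has_real_derivative k * (k * exp (k * s))) (at s)" for s
    by (auto intro!: derivative_eq_intros)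
  have c: "continuous_on UNIV (\<lambda>s. k * (k * exp (k * s)))" by (intro continuous_intros)
  show ?thesis unfolding gX_def[abs_def] HX_def[abs_def]
    using C2w_comp[OF d1 d2 c C2w_lin[of a]] by simp
qed

lemma HG_X: "HG (gX k (axis (emb i0) 1)) x $ i = k * exp (k * (axis (emb i0) 1 \<bullet> x)) * (if i = i0 then 1 else 0)"
  unfolding gX_def[abs_def] HG_comp by (simp add: HG_nth ax_inner hf_emb)

lemma HH_X: "HH (gX k (axis (emb i0) 1)) (HX k (axis (emb i0) 1)) x $ i $ j
   = k * k * exp (k * (axis (emb i0) 1 \<bullet> x)) * ((if i = i0 then 1 else 0) * (if j = i0 then 1 else 0))"
  unfolding gX_def[abs_def] HX_def[abs_def] HH_nth
  by (simp add: mv_add mv_scale outer_mv ax_inner hf_emb df_emb)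


definition S2 :: "real^('n::finite)^'n \<Rightarrow> ('n \<Rightarrow> 'n \<Rightarrow> real) \<Rightarrow> real" where
  "S2 A X = (\<Sum>i\<in>UNIV. \<Sum>j\<in>UNIV. A$i$j * X i j)"

lemma S2_add: "S2 A (\<lambda>i j. X i j + Y i j) = S2 A X + S2 A Y"
  by (simp add: S2_def distrib_left sum.distrib)
lemma S2_diff: "S2 A (\<lambda>i j. X i j - Y i j) = S2 A X - S2 A Y"
  by (simp add: S2_def right_diff_distrib sum_subtractf)
lemma S2_scale: "S2 A (\<lambda>i j. c * X i j) = c * S2 A X"
  by (simp add: S2_def sum_distrib_left mult_ac)
lemma S2_qf: "S2 A (\<lambda>i j. u$i * v$j) = qf A u v"
  by (simp add: S2_def sum_qf)
lemma S2_delta: "S2 A (\<lambda>i j. if i = j then 1 else 0) = trace A"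
  by (simp add: S2_def sum_delta_tr)
lemma S2_dd: "S2 A (\<lambda>i j. (if i = i0 then 1 else 0) * (if j = i0 then 1 else 0)) = A$i0$i0"
proof -
  have r: "A$i$j * ((if i = i0 then 1 else 0) * (if j = i0 then 1 else 0)) = (if i = i0 then (if j = i0 then A$i$j else 0) else 0)" for i j
    by simp
  have r2: "(\<Sum>j\<in>UNIV. if i = i0 then (if j = i0 then A$i$j else 0) else 0) = (if i = i0 then A$i$i0 else 0)" for i
    by (cases "i = i0") simp_all
  show ?thesis unfolding S2_def r r2 by simp
qed
lemma S2_Jm: "transpose A = A \<Longrightarrow> S2 A (\<lambda>i j. Jm i j) = 0"
  unfolding S2_def by (rule sum_Jm)

lemma trace_S2: "transpose A = A \<Longrightarrow> trace (- (A ** symm X)) = - S2 A (\<lambda>i j. X$i$j)"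
  by (simp add: trace_neg trace_symm S2_def)

lemma adm_diag: "pucci_adm l L A \<Longrightarrow> l \<le> A$i$i"
  using adm_lo[of l L A "axis i 1"] by (simp add: qf_axis)

lemma step1_core:
  fixes b :: "'a \<Rightarrow> ('d::finite) pt \<Rightarrow> 'd hz" and c :: "'a \<Rightarrow> 'd pt \<Rightarrow> real"
  assumes sub: "visc_sub (\<lambda>x r p M. pucci_minus l L M + (INF \<alpha>. c \<alpha> x * r - b \<alpha> x \<bullet> p)) u"
    and lpos: "0 < l" and lL: "l \<le> L"
    and c_nonneg: "\<forall>\<alpha> x. c \<alpha> x \<ge> 0"
    and keyx: "hproj x0 \<noteq> 0 \<Longrightarrow> \<forall>\<alpha>. b \<alpha> x0 \<bullet> heta x0 / (norm (hproj x0))\<^sup>2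
                     - c \<alpha> x0 * (hrho x0 ^ 4 / (norm (hproj x0))\<^sup>2) * ln (hrho x0)
                   \<le> l - L * ((2 * real CARD('d) + 2) - 1)"
    and a: "a > 0" "Pfun x0 \<ge> a"
    and rho1: "ln (hrho x0) \<ge> 0"
    and eps: "\<epsilon> > 0" and del: "\<delta> > 0" and kB: "k * l > B" "k > 0"
    and bB: "\<And>\<alpha>. norm (b \<alpha> x0) \<le> B"
    and hc: "\<And>\<alpha>. c \<alpha> x0 * u x0 \<ge> c \<alpha> x0 * (\<epsilon> * ln (hrho x0))"
    and e: "e > 0"
    and lm: "\<forall>y\<in>ball x0 e. u y - \<phi> y \<le> u x0 - \<phi> x0"
    and phidef: "\<phi> = (\<lambda>x. C0 + ((\<epsilon>/4) * Gl a (Pfun x) + (-\<delta>) * exp (k * (axis (emb i0) 1 \<bullet> x))))"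
  shows False
proof -
  define ai :: "'d pt" where "ai = axis (emb i0) 1"
  define g where "g = (\<lambda>x. 0 + ((\<epsilon>/4) *\<^sub>R gL a x + (-\<delta>) *\<^sub>R gX k ai x))"
  define H where "H = (\<lambda>x. 0 + ((\<epsilon>/4) *\<^sub>R HL a x + (-\<delta>) *\<^sub>R HX k ai x))"
  have C: "C2w \<phi> g H" unfolding phidef g_def H_def ai_def
    by (rule C2w_add[OF C2w_const C2w_add[OF C2w_scale[OF C2w_L[OF a(1)]] C2w_scale[OF C2w_X]]])
  define P where "P = Pfun x0"
  define m where "m = mfun x0"
  define t where "t = tcoord x0"
  define xh where "xh = hproj x0"
  define \<eta> where "\<eta> = heta x0"
  define ex where "ex = exp (k * (ai \<bullet> x0))"
  define K where "K = (2 * real CARD('d) + 1) * L - l"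
  have Pp: "P > 0" using a unfolding P_def by simp
  have G1: "Gl1 a P = 1 / P" using a unfolding Gl1_def P_def by simp
  have G2: "Gl2 a P = - 1 / P^2" using a unfolding Gl2_def P_def by (simp add: max_def)
  have exp0: "ex > 0" unfolding ex_def by simp
  have HGe: "HG g x0 $ i = (\<epsilon> / 4) * (Gl1 a P * (4 * \<eta> $ i)) + (-\<delta>) * (k * ex * (if i = i0 then 1 else 0))" for i
    unfolding g_def HG_add HG_scale HG_const HG_L ai_def HG_X P_def \<eta>_def ex_def by simp
  have HHe: "HH g H x0 $ i $ j = (\<epsilon> / 4) * (Gl2 a P * ((4 * \<eta> $ i) * (4 * \<eta> $ j)) + Gl1 a P *
       (8 * (xh $ i * xh $ j) + 4 * m * (if i = j then 1 else 0) + 8 * (Jv xh $ i * Jv xh $ j) + 4 * t * Jm i j))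
       + (-\<delta>) * (k * k * ex * ((if i = i0 then 1 else 0) * (if j = i0 then 1 else 0)))" for i j
    unfolding g_def H_def HH_add HH_scale HH_const HH_L ai_def HH_X HH_P P_def \<eta>_def ex_def xh_def m_def t_def by simp
  have b1: "- \<epsilon> * K * m / P + \<delta> * (k * k * ex) * l \<le> trace (- (A ** symm (HH g H x0)))" if adm: "pucci_adm l L A" for A
  proof -
    have sy: "transpose A = A" by (rule adm_sym[OF adm])
    have "S2 A (\<lambda>i j. HH g H x0 $ i $ j) = (\<epsilon> / 4) * (Gl2 a P * (16 * qf A \<eta> \<eta>) + Gl1 a P *
       (8 * qf A xh xh + 4 * m * trace A + 8 * qf A (Jv xh) (Jv xh) + 4 * t * 0))
       + (-\<delta>) * (k * k * ex * A$i0$i0)"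
    proof -
      have e1: "S2 A (\<lambda>i j. (4 * \<eta> $ i) * (4 * \<eta> $ j)) = 16 * qf A \<eta> \<eta>"
        using S2_scale[of A 16 "\<lambda>i j. \<eta> $ i * \<eta> $ j"] S2_qf[of A \<eta> \<eta>] by (simp add: mult_ac)
      show ?thesis unfolding HHe
        by (simp only: S2_add S2_scale S2_qf S2_delta S2_dd S2_Jm[OF sy] e1)
    qed
    also have "\<dots> = (\<epsilon> / P^2) * (-4 * qf A \<eta> \<eta> + P * (2 * qf A xh xh + m * trace A + 2 * qf A (Jv xh) (Jv xh)))
        - \<delta> * (k * k * ex * A$i0$i0)"
      unfolding G1 G2 using Pp by (simp add: field_simps power2_eq_square)
    finally have E: "S2 A (\<lambda>i j. HH g H x0 $ i $ j) = (\<epsilon> / P^2) * (-4 * qf A \<eta> \<eta> + P * (2 * qf A xh xh + m * trace A + 2 * qf A (Jv xh) (Jv xh)))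
        - \<delta> * (k * k * ex * A$i0$i0)" .
    have KI: "-4 * qf A \<eta> \<eta> + P * (2 * qf A xh xh + m * trace A + 2 * qf A (Jv xh) (Jv xh)) \<le> K * m * P"
    proof -
      have "\<eta> = (xh \<bullet> xh) *\<^sub>R xh + t *\<^sub>R Jv xh" unfolding \<eta>_def xh_def t_def heta_vec mfun_inner ..
      moreover have "P = (xh \<bullet> xh)^2 + t^2" unfolding P_def xh_def t_def Pfun_mt mfun_inner ..
      moreover have "m = xh \<bullet> xh" unfolding m_def xh_def mfun_inner ..
      ultimately show ?thesis using key_ineq[OF adm, of xh t] unfolding K_def by simp
    qed
    have "(\<epsilon> / P^2) * (-4 * qf A \<eta> \<eta> + P * (2 * qf A xh xh + m * trace A + 2 * qf A (Jv xh) (Jv xh))) \<le> (\<epsilon> / P^2) * (K * m * P)"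
      using KI eps Pp by (intro mult_left_mono) auto
    also have "(\<epsilon> / P^2) * (K * m * P) = \<epsilon> * K * m / P" using Pp by (simp add: field_simps power2_eq_square)
    finally have F1: "(\<epsilon> / P^2) * (-4 * qf A \<eta> \<eta> + P * (2 * qf A xh xh + m * trace A + 2 * qf A (Jv xh) (Jv xh))) \<le> \<epsilon> * K * m / P" .
    have F2: "\<delta> * (k * k * ex) * l \<le> \<delta> * (k * k * ex) * A$i0$i0"
      using adm_diag[OF adm, of i0] del exp0 by (intro mult_left_mono) auto
    have "trace (- (A ** symm (HH g H x0))) = - S2 A (\<lambda>i j. HH g H x0 $ i $ j)" by (rule trace_S2[OF sy])
    then show ?thesis unfolding E using F1 F2 by (simp add: algebra_simps)
  qed
  have HGv: "HG g x0 = (\<epsilon> / P) *\<^sub>R \<eta> - (\<delta> * k * ex) *\<^sub>R axis i0 1"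
    unfolding vec_eq_iff HGe G1 by (auto simp: axis_def field_simps)
  have b2: "\<epsilon> * K * m / P - \<delta> * k * ex * B \<le> c \<alpha> x0 * u x0 - b \<alpha> x0 \<bullet> HG g x0" for \<alpha>
  proof -
    have bi: "b \<alpha> x0 \<bullet> axis i0 1 \<le> B" using component_le_norm_cart[of "b \<alpha> x0" i0] bB[of \<alpha>]
      by (simp add: inner_axis)
    have "\<delta> * k * ex * (b \<alpha> x0 \<bullet> axis i0 1) \<ge> - (\<delta> * k * ex * B)"
    proof -
      have "- B \<le> b \<alpha> x0 \<bullet> axis i0 1" using component_le_norm_cart[of "b \<alpha> x0" i0] bB[of \<alpha>]
        by (simp add: inner_axis)
      then show ?thesis using del kB exp0 by (metis mult_left_mono mult_minus_right mult_pos_pos order_less_imp_le)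
    qed
    have cb: "\<epsilon> * K * m / P \<le> c \<alpha> x0 * (\<epsilon> * ln (hrho x0)) - (\<epsilon> / P) * (b \<alpha> x0 \<bullet> \<eta>)"
    proof (cases "hproj x0 = 0")
      case True
      then have m0: "m = 0" unfolding m_def mfun_norm by simp
      have "\<eta> = 0" unfolding \<eta>_def heta_vec using True by (simp add: Jv_zero)
      then show ?thesis using m0 c_nonneg rho1 eps by simp
    next
      case False
      have mp: "m > 0" unfolding m_def mfun_norm using False by simp
      have k1: "b \<alpha> x0 \<bullet> \<eta> / m - c \<alpha> x0 * (P / m) * ln (hrho x0) \<le> - K"
        using keyx[OF False] unfolding \<eta>_def m_def mfun_norm P_def hrho4[symmetric] K_def by (simp add: algebra_simps)
      have "m * (b \<alpha> x0 \<bullet> \<eta> / m - c \<alpha> x0 * (P / m) * ln (hrho x0)) \<le> m * (- K)"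
        using k1 mp by (intro mult_left_mono) auto
      moreover have "m * (b \<alpha> x0 \<bullet> \<eta> / m - c \<alpha> x0 * (P / m) * ln (hrho x0)) = b \<alpha> x0 \<bullet> \<eta> - c \<alpha> x0 * P * ln (hrho x0)"
        using mp by (simp add: field_simps)
      ultimately have k2: "b \<alpha> x0 \<bullet> \<eta> - c \<alpha> x0 * P * ln (hrho x0) \<le> - K * m"
        by (simp add: mult.commute)
      have "(\<epsilon> / P) * (b \<alpha> x0 \<bullet> \<eta> - c \<alpha> x0 * P * ln (hrho x0)) \<le> (\<epsilon> / P) * (- K * m)"
        using k2 eps Pp by (intro mult_left_mono) auto
      moreover have "(\<epsilon> / P) * (b \<alpha> x0 \<bullet> \<eta> - c \<alpha> x0 * P * ln (hrho x0)) = (\<epsilon> / P) * (b \<alpha> x0 \<bullet> \<eta>) - c \<alpha> x0 * (\<epsilon> * ln (hrho x0))"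
        using Pp by (simp add: field_simps)
      moreover have "(\<epsilon> / P) * (- K * m) = - (\<epsilon> * K * m / P)" by simp
      ultimately show ?thesis by linarith
    qed
    have "b \<alpha> x0 \<bullet> HG g x0 = (\<epsilon> / P) * (b \<alpha> x0 \<bullet> \<eta>) - \<delta> * k * ex * (b \<alpha> x0 \<bullet> axis i0 1)"
      unfolding HGv by (simp add: inner_diff_right)
    then show ?thesis using cb hc[of \<alpha>] \<open>\<delta> * k * ex * (b \<alpha> x0 \<bullet> axis i0 1) \<ge> - (\<delta> * k * ex * B)\<close> by linarith
  qed
  have "(- \<epsilon> * K * m / P + \<delta> * (k * k * ex) * l) + (\<epsilon> * K * m / P - \<delta> * k * ex * B) \<le> 0"
    by (rule touch[OF sub C e lm lpos lL b1 b2])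
  moreover have "(- \<epsilon> * K * m / P + \<delta> * (k * k * ex) * l) + (\<epsilon> * K * m / P - \<delta> * k * ex * B) = \<delta> * k * ex * (k * l - B)"
    by (simp add: algebra_simps)
  moreover have "\<delta> * k * ex * (k * l - B) > 0" using del kB exp0 by simp
  ultimately show False by linarith
qed



lemma usc_max:
  fixes f :: "'a::topological_space \<Rightarrow> real"
  assumes u: "usc f" and K: "compact K" "K \<noteq> {}"
  shows "\<exists>z\<in>K. \<forall>x\<in>K. f x \<le> f z"
proof (rule ccontr)
  assume "\<not> ?thesis"
  then have h: "\<forall>z\<in>K. \<exists>x\<in>K. f z < f x" by (auto simp: not_le)
  have cov: "K \<subseteq> (\<Union>y\<in>K. {x. f x < f y})" using h by blast
  have op: "\<And>y. y \<in> K \<Longrightarrow> open {x. f x < f y}" using u unfolding usc_def by blast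
  obtain C' where C': "C' \<subseteq> K" "finite C'" "K \<subseteq> (\<Union>y\<in>C'. {x. f x < f y})"
    using compactE_image[OF K(1) op cov] by blast
  have ne: "C' \<noteq> {}" using C'(3) K(2) by blast
  have "Max (f ` C') \<in> f ` C'" using C'(2) ne by (intro Max_in) auto
  then obtain y where y: "y \<in> C'" "f y = Max (f ` C')" by auto
  have yK: "y \<in> K" using y C' by blast
  then obtain y' where y': "y' \<in> C'" "f y < f y'" using C'(3) by blast
  have "f y' \<le> Max (f ` C')" using C'(2) y' by (intro Max_ge) auto
  then show False using y y' by simp
qed

lemma usc_diff:
  assumes u: "usc u" and c: "continuous_on UNIV \<phi>"
  shows "usc (\<lambda>x. u x - \<phi> x)"
  unfolding usc_def
proof
  fix t
  have eq: "{x. u x - \<phi> x < t} = (\<Union>q. {x. u x < q} \<inter> {x. q - t < \<phi> x})"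
  proof (intro set_eqI iffI)
    fix x assume "x \<in> {x. u x - \<phi> x < t}"
    then have "u x < (u x + \<phi> x + t)/2" "(u x + \<phi> x + t)/2 - t < \<phi> x" by auto
    then show "x \<in> (\<Union>q. {x. u x < q} \<inter> {x. q - t < \<phi> x})" by blast
  qed auto
  have "open ({x. u x < q} \<inter> {x. q - t < \<phi> x})" for q
  proof (rule open_Int)
    show "open {x. u x < q}" using u unfolding usc_def by blast
    show "open {x. q - t < \<phi> x}" by (rule open_Collect_less[OF continuous_on_const c])
  qed
  then show "open {x. u x - \<phi> x < t}" unfolding eq by (intro open_UN) auto
qed


lemma norm_decomp: "(norm (x :: ('d::finite) pt))^2 = mfun x + (tcoord x)^2"
proof -
  have "(norm x)^2 = (\<Sum>i\<in>UNIV. x$i * x$i)" by (simp add: power2_norm_eq_inner inner_vec_def)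
  also have "\<dots> = (\<Sum>k\<in>UNIV. x$Inl k * x$Inl k) + ((\<Sum>k\<in>UNIV. x$Inr (Inl k) * x$Inr (Inl k)) + x$Inr (Inr ()) * x$Inr (Inr ()))"
    by (simp add: sum_UNIV_plus UNIV_unit)
  also have "\<dots> = mfun x + (tcoord x)^2"
    by (simp add: mfun_def ax_inner sum_UNIV_plus emb_def tcoord_def power2_eq_square)
  finally show ?thesis .
qed

lemma mfun_nonneg: "mfun x \<ge> 0" by (simp add: mfun_norm)



lemma norm_bound_P: assumes "Pfun x \<le> R" "R \<ge> 1" shows "norm x \<le> 2 * R"
proof -
  have m2: "(mfun x)^2 \<le> R" "(tcoord x)^2 \<le> R"
    using assms(1) Pfun_mt[of x] zero_le_power2[of "mfun x"] zero_le_power2[of "tcoord x"] by linarith+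
  have mR: "mfun x \<le> R"
  proof (rule ccontr)
    assume "\<not> mfun x \<le> R"
    then have h: "R < mfun x" by simp
    have p: "0 < mfun x" "0 \<le> R" using h assms(2) by linarith+
    have "R * R < mfun x * mfun x" by (rule mult_strict_mono[OF h h p])
    moreover have "R \<le> R * R" using assms(2) mult_left_mono[of 1 R R] by simp
    moreover have "(mfun x)^2 = mfun x * mfun x" by (simp add: power2_eq_square)
    ultimately show False using m2 by linarith
  qed
  have n1: "(norm x)^2 \<le> 2 * R" using m2 mR norm_decomp[of x] by linarith
  have RR: "R \<le> R * R" using assms(2) mult_left_mono[of 1 R R] by simp
  have sq: "(2 * R)^2 = 4 * (R * R)" unfolding power2_eq_square by simp
  have "(norm x)^2 \<le> (2 * R)^2" unfolding sq using n1 RR assms(2) by linarith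
  moreover have "0 \<le> 2 * R" using assms(2) by simp
  ultimately show ?thesis by (rule power2_le_imp_le)
qed

lemma P_le_norm: "Pfun x \<le> (norm x)^4 + (norm x)^2"
proof -
  have "mfun x \<le> (norm x)^2" "(tcoord x)^2 \<le> (norm x)^2" using norm_decomp[of x] mfun_nonneg[of x] by auto
  then have "(mfun x)^2 \<le> ((norm x)^2)^2" using mfun_nonneg[of x] by (intro power_mono) auto
  moreover have "((norm x)^2)^2 = (norm x)^4" by (simp flip: power_mult)
  ultimately show ?thesis using Pfun_mt[of x] \<open>(tcoord x)^2 \<le> (norm x)^2\<close> by linarith
qed

lemma Pfun_cont: "continuous_on UNIV Pfun"
  by (rule C2w_cont_f[OF C2w_P])

lemma hrho_nonneg: "hrho x \<ge> 0" by (simp add: hrho_Pfun)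

lemma hrho_gt: assumes "r \<ge> 0" "Pfun x > r^4" shows "hrho x > r"
proof (rule ccontr)
  assume "\<not> hrho x > r"
  then have "hrho x ^ 4 \<le> r ^ 4" using hrho_nonneg[of x] by (intro power_mono) auto
  then show False using assms hrho4[of x] by simp
qed

lemma hrho_ge: assumes "r \<ge> 0" "Pfun x \<ge> r^4" shows "hrho x \<ge> r"
proof (rule ccontr)
  assume "\<not> hrho x \<ge> r"
  then have "hrho x ^ 4 < r ^ 4" using hrho_nonneg[of x] by (intro power_strict_mono) auto
  then show False using assms hrho4[of x] by simp
qed



lemma hrho_le_norm: "hrho x \<le> norm x + 1"
proof -
  define s where "s = norm x"
  have s0: "s \<ge> 0" unfolding s_def by simp
  have a1: "(s + 1)^2 \<ge> s^2 + 1" using s0 by (simp add: power2_eq_square algebra_simps)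
  have a2: "((s + 1)^2)^2 \<ge> (s^2 + 1)^2" using a1 by (intro power_mono) auto
  have a3: "(s^2 + 1)^2 = s^4 + 2 * s^2 + 1" by (simp add: power2_eq_square power4_eq_xxxx algebra_simps)
  have a4: "((s + 1)^2)^2 = (s + 1)^4" by (simp flip: power_mult)
  have "hrho x ^ 4 \<le> s^4 + s^2" unfolding hrho4 s_def by (rule P_le_norm)
  also have "\<dots> \<le> (s + 1)^4" using a2 a3 a4 zero_le_power2[of s] by linarith
  finally have "hrho x ^ Suc 3 \<le> (s + 1) ^ Suc 3" by simp
  then have "hrho x \<le> s + 1" by (rule power_le_imp_le_base) (use s0 in simp)
  then show ?thesis unfolding s_def .
qed

lemma compact_Pset: "compact {x::('d::finite) pt. r1 \<le> Pfun x \<and> Pfun x \<le> R}"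
proof -
  have cl: "closed {x::'d pt. r1 \<le> Pfun x \<and> Pfun x \<le> R}"
  proof -
    have "{x::'d pt. r1 \<le> Pfun x \<and> Pfun x \<le> R} = {x. r1 \<le> Pfun x} \<inter> {x. Pfun x \<le> R}" by auto
    moreover have "closed {x::'d pt. r1 \<le> Pfun x}" by (rule closed_Collect_le[OF continuous_on_const Pfun_cont])
    moreover have "closed {x::'d pt. Pfun x \<le> R}" by (rule closed_Collect_le[OF Pfun_cont continuous_on_const])
    ultimately show ?thesis by (simp add: closed_Int)
  qed
  have "bounded {x::'d pt. r1 \<le> Pfun x \<and> Pfun x \<le> R}"
    unfolding bounded_iff
  proof (intro exI ballI)
    fix x assume "x \<in> {x::'d pt. r1 \<le> Pfun x \<and> Pfun x \<le> R}"
    then have "Pfun x \<le> max R 1" by (simp add: le_max_iff_disj)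
    then show "norm x \<le> 2 * max R 1" by (rule norm_bound_P) simp
  qed
  then show ?thesis using cl by (simp add: compact_eq_bounded_closed)
qed

lemma Pfun_zero: "Pfun 0 = 0"
  by (simp add: Pfun_def mfun_def)


lemma step1:
  fixes b :: "'a \<Rightarrow> ('d::finite) pt \<Rightarrow> 'd hz" and c :: "'a \<Rightarrow> 'd pt \<Rightarrow> real" and u :: "'d pt \<Rightarrow> real"
  assumes sub: "visc_sub (\<lambda>x r p M. pucci_minus l L M + (INF \<alpha>. c \<alpha> x * r - b \<alpha> x \<bullet> p)) u"
    and lpos: "0 < l" and lL: "l \<le> L"
    and Hi_fin: "\<forall>x r p. bdd_below (range (\<lambda>\<alpha>. c \<alpha> x * r - b \<alpha> x \<bullet> p))"
    and b_lip: "\<forall>R>0. \<exists>K. \<forall>\<alpha> x y. norm x \<le> R \<longrightarrow> norm y \<le> R \<longrightarrow> norm (b \<alpha> x - b \<alpha> y) \<le> K * norm (x - y)"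
    and c_nonneg: "\<forall>\<alpha> x. c \<alpha> x \<ge> 0"
    and key: "\<forall>x. hrho x \<ge> R0 \<longrightarrow> hproj x \<noteq> 0 \<longrightarrow>
               (\<forall>\<alpha>. b \<alpha> x \<bullet> heta x / (norm (hproj x))\<^sup>2
                     - c \<alpha> x * (hrho x ^ 4 / (norm (hproj x))\<^sup>2) * ln (hrho x)
                   \<le> l - L * ((2 * real CARD('d) + 2) - 1))"
    and ls: "Limsup at_infinity (\<lambda>x. ereal (u x / ln (hrho x))) \<le> 0"
    and cu: "(\<forall>\<alpha> x. c \<alpha> x = 0) \<or> (\<forall>x. u x \<ge> 0)"
  shows "\<exists>z. \<forall>x. u x \<le> u z"
proof -
  have usc: "usc u" using sub unfolding visc_sub_def by blast
  define r where "r = max R0 2"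
  have r2: "r \<ge> 2" "r \<ge> R0" unfolding r_def by simp_all
  define r4 where "r4 = r^4"
  have r4pos: "r4 > 0" unfolding r4_def using r2 by simp
  define K where "K = {x::'d pt. 0 \<le> Pfun x \<and> Pfun x \<le> r4}"
  have Kc: "compact K" unfolding K_def by (rule compact_Pset)
  have K0: "0 \<in> K" unfolding K_def using r4pos by (simp add: Pfun_zero)
  obtain z where z: "z \<in> K" "\<forall>x\<in>K. u x \<le> u z" using usc_max[OF usc Kc] K0 by blast
  define M where "M = u z"
  have claim: "u y \<le> M" for y
  proof (rule ccontr)
    assume nle: "\<not> u y \<le> M"
    then have "y \<notin> K" using z by (auto simp: M_def)
    then have Py: "Pfun y > r4" unfolding K_def using Pfun_nonneg[of y] by auto
    have rhoy: "hrho y > r" using hrho_gt[of r y] r2 Py unfolding r4_def by simp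
    define \<theta> where "\<theta> = u y - M"
    have th: "\<theta> > 0" using nle unfolding \<theta>_def by simp
    define Ly where "Ly = ln (hrho y)"
    have Ly: "Ly > 0" unfolding Ly_def using rhoy r2 by simp
    define \<epsilon> where "\<epsilon> = \<theta> / (2 * Ly)"
    have eps: "\<epsilon> > 0" unfolding \<epsilon>_def using th Ly by simp
    have epsLy: "\<epsilon> * Ly = \<theta> / 2" unfolding \<epsilon>_def using Ly by simp
    have "ereal (\<epsilon>/2) > Limsup at_infinity (\<lambda>x. ereal (u x / ln (hrho x)))"
      using ls eps by (meson ereal_less(2) half_gt_zero order.strict_trans1 zero_ereal_def)
    then have "eventually (\<lambda>x. ereal (u x / ln (hrho x)) < ereal (\<epsilon>/2)) at_infinity"
      by (rule Limsup_lessD)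
    then obtain bnd where bnd: "\<And>x. bnd \<le> norm x \<Longrightarrow> u x / ln (hrho x) < \<epsilon>/2"
      unfolding eventually_at_infinity by auto
    define R2 where "R2 = max (max (hrho y + 1) (exp (2 * \<bar>M\<bar> / \<epsilon>))) (\<bar>bnd\<bar> + 1)"
    have R2: "R2 > hrho y" "R2 \<ge> exp (2 * \<bar>M\<bar> / \<epsilon>)" "R2 \<ge> \<bar>bnd\<bar> + 1" unfolding R2_def by auto
    have R2r: "R2 > r" using R2(1) rhoy by simp
    have lnR2: "ln R2 \<ge> 2 * \<bar>M\<bar> / \<epsilon>"
    proof -
      have R2pos: "R2 > 0" using R2r r2 by simp
      show ?thesis using R2(2) R2pos by (simp add: ln_ge_iff)
    qed
    define R4 where "R4 = R2^4"
    have PyR4: "Pfun y < R4"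
    proof -
      have "hrho y ^ 4 < R2 ^ 4" using R2(1) hrho_nonneg[of y] by (intro power_strict_mono) auto
      then show ?thesis unfolding R4_def hrho4 .
    qed
    define Ann where "Ann = {x::'d pt. r4 \<le> Pfun x \<and> Pfun x \<le> R4}"
    have Annc: "compact Ann" unfolding Ann_def by (rule compact_Pset)
    have yAnn: "y \<in> Ann" unfolding Ann_def using Py PyR4 by simp
    define Rb where "Rb = 2 * max R4 1"
    have Rb: "\<And>x. x \<in> Ann \<Longrightarrow> norm x \<le> Rb"
    proof -
      fix x assume "x \<in> Ann"
      then have "Pfun x \<le> max R4 1" unfolding Ann_def by (simp add: le_max_iff_disj)
      then show "norm x \<le> Rb" unfolding Rb_def by (rule norm_bound_P) simp
    qed
    have Rb0: "Rb > 0" unfolding Rb_def by simp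
    obtain B where B: "\<And>\<alpha> x. norm x \<le> Rb \<Longrightarrow> norm (b \<alpha> x) \<le> B"
      using b_bdd[OF Hi_fin b_lip, of Rb] by blast
    define k where "k = (\<bar>B\<bar> + 1) / l"
    have kpos: "k > 0" unfolding k_def using lpos by simp
    have kl: "k * l > B" unfolding k_def using lpos by simp
    define E where "E = exp (k * Rb)"
    have Epos: "E > 0" unfolding E_def by simp
    define \<delta> where "\<delta> = \<theta> / (4 * E)"
    have del: "\<delta> > 0" unfolding \<delta>_def using th Epos by simp
    have dE: "\<delta> * E = \<theta> / 4" unfolding \<delta>_def using Epos by simp
    define a where "a = r4 / 2"
    have apos: "a > 0" unfolding a_def using r4pos by simp
    define i0 :: "'d + 'd" where "i0 = undefined"
    define ai :: "'d pt" where "ai = axis (emb i0) 1"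
    define \<phi> where "\<phi> = (\<lambda>x. (M + \<delta> * E) + ((\<epsilon>/4) * Gl a (Pfun x) + (-\<delta>) * exp (k * (ai \<bullet> x))))"
    have C\<phi>: "C2w \<phi> (\<lambda>x. 0 + ((\<epsilon>/4) *\<^sub>R gL a x + (-\<delta>) *\<^sub>R gX k ai x)) (\<lambda>x. 0 + ((\<epsilon>/4) *\<^sub>R HL a x + (-\<delta>) *\<^sub>R HX k ai x))"
      unfolding \<phi>_def
      by (rule C2w_add[OF C2w_const C2w_add[OF C2w_scale[OF C2w_L[OF apos]] C2w_scale[OF C2w_X]]])
    have \<phi>c: "continuous_on UNIV \<phi>" by (rule C2w_cont_f[OF C\<phi>])
    have expE: "exp (k * (ai \<bullet> x)) \<le> E" if "x \<in> Ann" for x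
    proof -
      have "ai \<bullet> x \<le> norm x" unfolding ai_def ax_inner using component_le_norm_cart[of x "emb i0"] by simp
      then have "ai \<bullet> x \<le> Rb" using Rb[OF that] by simp
      then have "k * (ai \<bullet> x) \<le> k * Rb" using kpos by (intro mult_left_mono) auto
      then show ?thesis unfolding E_def by simp
    qed
    have \<phi>Ann: "\<phi> x = M + \<delta> * E + \<epsilon> * ln (hrho x) - \<delta> * exp (k * (ai \<bullet> x))" if "r4 \<le> Pfun x" for x
    proof -
      have Pp: "Pfun x > 0" using that r4pos by simp
      have "Gl a (Pfun x) = ln (Pfun x)" unfolding Gl_def a_def using that r4pos by simp
      then show ?thesis unfolding \<phi>_def using ln_hrho[OF Pp] by simp
    qed
    have \<phi>lo: "\<phi> x \<ge> M + \<epsilon> * ln (hrho x)" if "x \<in> Ann" for x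
    proof -
      have "\<delta> * exp (k * (ai \<bullet> x)) \<le> \<delta> * E" using expE[OF that] del by (intro mult_left_mono) auto
      then show ?thesis using \<phi>Ann[of x] that unfolding Ann_def by simp
    qed
    define \<Psi> where "\<Psi> = (\<lambda>x. u x - \<phi> x)"
    have \<Psi>usc: "usc \<Psi>" unfolding \<Psi>_def by (rule usc_diff[OF usc \<phi>c])
    obtain x0 where x0: "x0 \<in> Ann" "\<forall>x\<in>Ann. \<Psi> x \<le> \<Psi> x0"
      using usc_max[OF \<Psi>usc Annc] yAnn by blast
    have \<Psi>y: "\<Psi> y > 0"
    proof -
      have "0 \<le> \<delta> * exp (k * (ai \<bullet> y))" using del by simp
      then have "\<phi> y \<le> M + \<delta> * E + \<epsilon> * Ly" using \<phi>Ann[of y] Py unfolding Ly_def by simp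
      then have "\<phi> y \<le> M + \<theta>/4 + \<theta>/2" using dE epsLy by simp
      moreover have "u y = M + \<theta>" unfolding \<theta>_def by simp
      ultimately show ?thesis unfolding \<Psi>_def using th by linarith
    qed
    have \<Psi>x0: "\<Psi> x0 > 0" using x0 yAnn \<Psi>y by force
    have rho0: "hrho x0 \<ge> r" using hrho_ge[of r x0] x0(1) r2 unfolding Ann_def r4_def by simp
    have lnr0: "ln (hrho x0) > 0" using rho0 r2 by simp
    have lo: "r4 < Pfun x0"
    proof (rule ccontr)
      assume "\<not> r4 < Pfun x0"
      then have "x0 \<in> K" unfolding K_def using Pfun_nonneg[of x0] by simp
      then have "u x0 \<le> M" using z unfolding M_def by blast
      then have "\<Psi> x0 \<le> - \<epsilon> * ln (hrho x0)" unfolding \<Psi>_def using \<phi>lo[OF x0(1)] by simp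
      moreover have "\<epsilon> * ln (hrho x0) > 0" using eps lnr0 by simp
      ultimately show False using \<Psi>x0 by simp
    qed
    have hi: "Pfun x0 < R4"
    proof (rule ccontr)
      assume "\<not> Pfun x0 < R4"
      then have "Pfun x0 \<ge> R2^4" unfolding R4_def by simp
      then have rR2: "hrho x0 \<ge> R2" using hrho_ge[of R2 x0] R2r r2 by simp
      have "norm x0 \<ge> bnd" using hrho_le_norm[of x0] rR2 R2(3) by linarith
      then have "u x0 / ln (hrho x0) < \<epsilon>/2" by (rule bnd)
      then have ux0: "u x0 < (\<epsilon>/2) * ln (hrho x0)" using lnr0 by (simp add: divide_less_eq)
      have "ln (hrho x0) \<ge> ln R2" using rR2 R2r r2 by (simp add: ln_le_cancel_iff)
      then have "(\<epsilon>/2) * ln (hrho x0) \<ge> (\<epsilon>/2) * (2 * \<bar>M\<bar> / \<epsilon>)" using lnR2 eps by (intro mult_left_mono) auto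
      then have "(\<epsilon>/2) * ln (hrho x0) \<ge> \<bar>M\<bar>" using eps by simp
      then have "\<Psi> x0 < 0" unfolding \<Psi>_def using \<phi>lo[OF x0(1)] ux0 by linarith
      then show False using \<Psi>x0 by simp
    qed
    define U where "U = {x::'d pt. r4 < Pfun x} \<inter> {x. Pfun x < R4}"
    have Uo: "open U" unfolding U_def
      by (intro open_Int open_Collect_less[OF continuous_on_const Pfun_cont] open_Collect_less[OF Pfun_cont continuous_on_const])
    have x0U: "x0 \<in> U" unfolding U_def using lo hi by simp
    obtain e where e: "e > 0" "ball x0 e \<subseteq> U" using Uo x0U open_contains_ball by blast
    have UA: "U \<subseteq> Ann" unfolding U_def Ann_def by auto
    have lm: "\<forall>y\<in>ball x0 e. u y - \<phi> y \<le> u x0 - \<phi> x0"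
      using e(2) UA x0(2) unfolding \<Psi>_def by blast
    have hc: "c \<alpha> x0 * u x0 \<ge> c \<alpha> x0 * (\<epsilon> * ln (hrho x0))" for \<alpha>
    proof -
      have ux: "u x0 > M + \<epsilon> * ln (hrho x0)" using \<Psi>x0 \<phi>lo[OF x0(1)] unfolding \<Psi>_def by simp
      show ?thesis
      proof (cases "\<forall>\<alpha> x. c \<alpha> x = 0")
        case True then show ?thesis by simp
      next
        case False
        then have "\<forall>x. u x \<ge> 0" using cu by blast
        then have "M \<ge> 0" unfolding M_def by simp
        then have "u x0 \<ge> \<epsilon> * ln (hrho x0)" using ux by simp
        then show ?thesis using c_nonneg by (intro mult_left_mono) auto
      qed
    qed
    have keyx: "hproj x0 \<noteq> 0 \<Longrightarrow> \<forall>\<alpha>. b \<alpha> x0 \<bullet> heta x0 / (norm (hproj x0))\<^sup>2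
                     - c \<alpha> x0 * (hrho x0 ^ 4 / (norm (hproj x0))\<^sup>2) * ln (hrho x0)
                   \<le> l - L * ((2 * real CARD('d) + 2) - 1)"
      using key rho0 r2 by force
    have bB: "norm (b \<alpha> x0) \<le> B" for \<alpha> using B Rb[OF x0(1)] by blast
    have Pa: "Pfun x0 \<ge> a" using lo r4pos unfolding a_def by simp
    show False
      by (rule step1_core[OF sub lpos lL c_nonneg keyx apos Pa less_imp_le[OF lnr0] eps del kl kpos bB hc e(1) lm \<phi>_def[unfolded ai_def]])
  qed
  then show ?thesis unfolding M_def by blast
qed



lemma hfield_cont: "continuous_on UNIV (hfield i :: ('d::finite) pt \<Rightarrow> 'd pt)"
  by (rule continuous_at_imp_continuous_on) (use hfield_deriv has_derivative_continuous in blast)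

lemma dfield_lin: "bounded_linear (dfield j :: ('d::finite) pt \<Rightarrow> 'd pt)"
  using hfield_deriv has_derivative_bounded_linear by blast

lemma dfield_hfield_cont: "continuous_on UNIV (\<lambda>x::('d::finite) pt. dfield j (hfield i x))"
  by (rule continuous_on_compose2[OF linear_continuous_on[OF dfield_lin] hfield_cont]) auto

lemma adm_entry_bound:
  assumes adm: "pucci_adm l L A" and lpos: "0 < l"
  shows "\<bar>A$i$j\<bar> \<le> L"
proof (cases "i = j")
  case True
  have "A$i$i \<le> L" using adm_hi[OF adm, of "axis i 1"] by (simp add: qf_axis)
  moreover have "l \<le> A$i$i" by (rule adm_diag[OF adm])
  ultimately show ?thesis using True lpos by simp
next
  case False
  have sy: "qf A (axis j 1) (axis i 1) = qf A (axis i 1) (axis j 1)" using qf_sym[OF adm_sym[OF adm]] by metis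
  have n: "(norm (axis i 1 + axis j (1::real) :: real^'a))^2 = 2" "(norm (axis i 1 - axis j (1::real) :: real^'a))^2 = 2"
    using False by (simp_all add: power2_norm_eq_inner inner_add inner_diff inner_axis_axis)
  have p: "qf A (axis i 1 + axis j 1) (axis i 1 + axis j 1) = A$i$i + A$j$j + 2 * A$i$j"
    using sy by (simp add: qf_add1 qf_add2 qf_axis adm_entry_sym[OF adm, of j i])
  have m: "qf A (axis i 1 - axis j 1) (axis i 1 - axis j 1) = A$i$i + A$j$j - 2 * A$i$j"
    using sy by (simp add: qf_diff1 qf_diff2 qf_axis adm_entry_sym[OF adm, of j i])
  have "A$i$i + A$j$j + 2 * A$i$j \<le> 2 * L" using adm_hi[OF adm, of "axis i 1 + axis j 1"] p n(1) by simp
  moreover have "A$i$i + A$j$j - 2 * A$i$j \<le> 2 * L" using adm_hi[OF adm, of "axis i 1 - axis j 1"] m n(2) by simp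
  moreover have "l \<le> A$i$i" "l \<le> A$j$j" by (rule adm_diag[OF adm])+
  ultimately show ?thesis using lpos by linarith
qed

lemma S2_bound:
  assumes adm: "pucci_adm l L A" and lpos: "0 < l"
  shows "\<bar>S2 A X\<bar> \<le> L * (\<Sum>i\<in>UNIV. \<Sum>j\<in>UNIV. \<bar>X i j\<bar>)"
proof -
  have "\<bar>S2 A X\<bar> \<le> (\<Sum>i\<in>UNIV. \<bar>\<Sum>j\<in>UNIV. A$i$j * X i j\<bar>)" unfolding S2_def by (rule sum_abs)
  also have "\<dots> \<le> (\<Sum>i\<in>UNIV. \<Sum>j\<in>UNIV. \<bar>A$i$j * X i j\<bar>)" by (intro sum_mono sum_abs)
  also have "\<dots> \<le> (\<Sum>i\<in>UNIV. \<Sum>j\<in>UNIV. L * \<bar>X i j\<bar>)"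
    by (intro sum_mono) (simp add: abs_mult mult_right_mono adm_entry_bound[OF adm lpos])
  also have "\<dots> = L * (\<Sum>i\<in>UNIV. \<Sum>j\<in>UNIV. \<bar>X i j\<bar>)" by (simp add: sum_distrib_left)
  finally show ?thesis .
qed

lemma C2w_Pq: "C2w (\<lambda>x. (x - q) \<bullet> (x - q)) (\<lambda>x. 2 *\<^sub>R (x - q)) (\<lambda>_. 2 *\<^sub>R mat 1 :: real^'n::finite^'n)"
proof -
  have d0: "((\<lambda>x::real^'n. x - q) has_derivative (\<lambda>h. h)) (at x)" for x
    by (auto intro!: derivative_eq_intros)
  have "((\<lambda>x. (x - q) \<bullet> (x - q)) has_derivative (\<lambda>h. (2 *\<^sub>R (x - q)) \<bullet> h)) (at x)" for x
    using has_derivative_inner[OF d0 d0, of x] by (simp add: inner_commute algebra_simps)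
  moreover have "((\<lambda>x::real^'n. 2 *\<^sub>R (x - q)) has_derivative (\<lambda>h. (2 *\<^sub>R mat 1 :: real^'n^'n) *v h)) (at x)" for x
    using has_derivative_scaleR_right[OF d0, of 2] by (simp add: mv_scale)
  moreover have "continuous_on UNIV (\<lambda>_::real^'n. 2 *\<^sub>R mat 1 :: real^'n^'n)" by (rule continuous_on_const)
  ultimately show ?thesis unfolding C2w_def by blast
qed

lemma HG_Pq: "HG (\<lambda>x. 2 *\<^sub>R (x - q)) x $ i = 2 * ((x - q) \<bullet> hfield i x)"
  by (simp add: HG_nth)

definition SPq :: "('d::finite) pt \<Rightarrow> 'd pt \<Rightarrow> ('d + 'd) \<Rightarrow> ('d + 'd) \<Rightarrow> real" where
  "SPq q x i j = 2 * (hfield i x \<bullet> hfield j x) + 2 * ((x - q) \<bullet> dfield j (hfield i x))"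

lemma HH_Pq: "HH (\<lambda>x. 2 *\<^sub>R (x - q)) (\<lambda>_. 2 *\<^sub>R mat 1) x $ i $ j = SPq q x i j"
  by (simp add: HH_nth mv_scale SPq_def)

lemma SPq_cont: "continuous_on UNIV (\<lambda>x. SPq q x i j)"
  unfolding SPq_def
  by (intro continuous_intros hfield_cont dfield_hfield_cont)

lemma midpoint_geom:
  fixes q z x :: "'n::real_inner"
  assumes "norm (x - (1/2) *\<^sub>R (q + z)) \<le> norm (z - q) / 2"
  shows "(norm (x - q))^2 + (norm (x - z))^2 \<le> (norm (z - q))^2"
proof -
  define a where "a = x - (1/2) *\<^sub>R (q + z)"
  define w where "w = (1/2) *\<^sub>R (z - q)"
  have hv: "(1/2) *\<^sub>R v + (1/2) *\<^sub>R v = v" for v :: 'n by (simp add: scaleR_add_left[symmetric])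
  have xq: "x - q = a + w" unfolding a_def w_def by (simp add: algebra_simps hv)
  have xz: "x - z = a - w" unfolding a_def w_def by (simp add: algebra_simps hv)
  have "(norm (x - q))^2 + (norm (x - z))^2 = 2 * (norm a)^2 + 2 * (norm w)^2"
    unfolding xq xz power2_norm_eq_inner by (simp add: inner_add inner_diff inner_commute algebra_simps)
  also have "(norm w)^2 = (norm (z - q))^2 / 4" unfolding w_def by (simp add: power2_eq_square)
  also have "(norm a)^2 \<le> (norm (z - q) / 2)^2" using assms unfolding a_def by (intro power_mono) auto
  then have "2 * (norm a)^2 \<le> (norm (z - q))^2 / 2" by (simp add: power2_eq_square)
  finally show ?thesis by simp
qed


lemma cont_bound_cball:
  fixes f :: "'n::euclidean_space \<Rightarrow> real"
  assumes "continuous_on UNIV f"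
  shows "\<exists>S. \<forall>x\<in>cball z r. \<bar>f x\<bar> \<le> S"
proof -
  have "compact (f ` cball z r)"
    by (rule compact_continuous_image[OF continuous_on_subset[OF assms] compact_cball]) simp
  then have "bounded (f ` cball z r)" by (rule compact_imp_bounded)
  then obtain S where "\<forall>y\<in>f ` cball z r. norm y \<le> S" unfolding bounded_iff by blast
  then show ?thesis by auto
qed

lemma hopf:
  fixes b :: "'a \<Rightarrow> ('d::finite) pt \<Rightarrow> 'd hz" and c :: "'a \<Rightarrow> 'd pt \<Rightarrow> real" and u :: "'d pt \<Rightarrow> real"
  assumes sub: "visc_sub (\<lambda>x r p M. pucci_minus l L M + (INF \<alpha>. c \<alpha> x * r - b \<alpha> x \<bullet> p)) u"
    and lpos: "0 < l" and lL: "l \<le> L"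
    and Hi_fin: "\<forall>x r p. bdd_below (range (\<lambda>\<alpha>. c \<alpha> x * r - b \<alpha> x \<bullet> p))"
    and b_lip: "\<forall>R>0. \<exists>K. \<forall>\<alpha> x y. norm x \<le> R \<longrightarrow> norm y \<le> R \<longrightarrow> norm (b \<alpha> x - b \<alpha> y) \<le> K * norm (x - y)"
    and cu0: "\<And>\<alpha> x. c \<alpha> x * u x \<ge> 0"
    and uM: "\<And>x. u x \<le> M" and uz: "u z = M" and zq: "z \<noteq> q"
    and inb: "\<And>y. dist y q < dist q z \<Longrightarrow> u y < M"
  shows "(z - q) \<bullet> hfield i1 z = 0"
proof (rule ccontr)
  assume nz: "(z - q) \<bullet> hfield i1 z \<noteq> 0"
  have usc: "usc u" using sub unfolding visc_sub_def by blast
  define R where "R = norm (z - q)"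
  have Rp: "R > 0" unfolding R_def using zq by simp
  define q' where "q' = (1/2) *\<^sub>R (q + z)"
  have hv: "(1/2) *\<^sub>R v + (1/2) *\<^sub>R v = v" for v :: "'d pt" by (simp add: scaleR_add_left[symmetric])
  have zq': "z - q' = (1/2) *\<^sub>R (z - q)" unfolding q'_def by (simp add: algebra_simps hv)
  have Pqz: "(z - q') \<bullet> (z - q') = (R/2)^2" unfolding zq' R_def by (simp add: power2_norm_eq_inner[symmetric] power2_eq_square)
  define gv :: "'d pt \<Rightarrow> 'd hz" where "gv x = (\<chi> i. (x - q') \<bullet> hfield i x)" for x
  have gvz: "gv z \<noteq> 0"
  proof
    assume "gv z = 0"
    then have "gv z $ i1 = 0" by simp
    then show False using nz unfolding gv_def zq' by simp
  qed
  have gvc: "continuous_on UNIV gv" unfolding gv_def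
    by (intro continuous_intros hfield_cont)
  define g0 where "g0 = norm (gv z) / 2"
  have g0: "g0 > 0" unfolding g0_def using gvz by simp
  obtain \<rho>1 where \<rho>1: "\<rho>1 > 0" "\<And>x. dist x z < \<rho>1 \<Longrightarrow> dist (gv x) (gv z) < g0"
    using gvc g0 unfolding continuous_on_iff by (metis UNIV_I)
  define \<rho>0 where "\<rho>0 = \<rho>1 / 2"
  have \<rho>0: "\<rho>0 > 0" "\<rho>0 < \<rho>1" unfolding \<rho>0_def using \<rho>1 by auto
  have gvlo: "norm (gv x) \<ge> g0" if "x \<in> cball z \<rho>0" for x
  proof -
    have "dist (gv x) (gv z) < g0" using that \<rho>0 \<rho>1(2)[of x] by (simp add: dist_commute)
    then have "norm (gv z) \<le> norm (gv x) + g0" using norm_triangle_sub[of "gv z" "gv x"] by (simp add: dist_norm norm_minus_commute)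
    then show ?thesis unfolding g0_def by simp
  qed
  obtain Sb where Sb: "\<And>x. x \<in> cball z \<rho>0 \<Longrightarrow> \<bar>\<Sum>i\<in>UNIV. \<Sum>j\<in>UNIV. \<bar>SPq q' x i j\<bar>\<bar> \<le> Sb"
  proof -
    have "continuous_on UNIV (\<lambda>x. \<Sum>i\<in>UNIV. \<Sum>j\<in>UNIV. \<bar>SPq q' x i j\<bar>)"
      by (intro continuous_intros SPq_cont)
    then show ?thesis using cont_bound_cball that by blast
  qed
  obtain Gb where Gb: "\<And>x. x \<in> cball z \<rho>0 \<Longrightarrow> \<bar>norm (gv x)\<bar> \<le> Gb"
  proof -
    have "continuous_on UNIV (\<lambda>x. norm (gv x))" by (intro continuous_intros gvc)
    then show ?thesis using cont_bound_cball that by blast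
  qed
  obtain B where B: "\<And>\<alpha> x. norm x \<le> norm z + \<rho>0 \<Longrightarrow> norm (b \<alpha> x) \<le> B"
    using b_bdd[OF Hi_fin b_lip, of "norm z + \<rho>0"] by blast
  have Bc: "norm (b \<alpha> x) \<le> B" if "x \<in> cball z \<rho>0" for \<alpha> x
  proof -
    have "norm x \<le> norm z + norm (x - z)" using norm_triangle_sub[of x z] by simp
    also have "norm (x - z) \<le> \<rho>0" using that by (simp add: dist_norm norm_minus_commute)
    finally show ?thesis using B by simp
  qed
  define Sph where "Sph = {x. dist x z = \<rho>0} \<inter> {x. norm (x - q') \<le> R/2}"
  have Sphc: "compact Sph"
  proof -
    have "Sph \<subseteq> cball z \<rho>0" unfolding Sph_def by (auto simp: dist_commute)
    moreover have "closed Sph" unfolding Sph_def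
      by (intro closed_Int closed_Collect_eq closed_Collect_le continuous_intros)
    ultimately show ?thesis using compact_cball bounded_subset compact_eq_bounded_closed by metis
  qed
  have SphM: "u x < M" if "x \<in> Sph" for x
  proof -
    have xz: "x \<noteq> z" using that \<rho>0 unfolding Sph_def by auto
    have "norm (x - q') \<le> norm (z - q) / 2" using that unfolding Sph_def R_def by simp
    then have "(norm (x - q))^2 + (norm (x - z))^2 \<le> (norm (z - q))^2"
      unfolding q'_def by (rule midpoint_geom)
    moreover have "(norm (x - z))^2 > 0" using xz by simp
    ultimately have "(norm (x - q))^2 < (norm (z - q))^2" by linarith
    then have "norm (x - q) < norm (z - q)" by (rule power2_less_imp_less) simp
    then have "dist x q < dist q z" by (simp add: dist_norm norm_minus_commute)
    then show ?thesis by (rule inb)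
  qed
  obtain \<gamma> where gam: "\<gamma> > 0" "\<And>x. x \<in> Sph \<Longrightarrow> u x \<le> M - \<gamma>"
  proof (cases "Sph = {}")
    case True then show ?thesis using that[of 1] by auto
  next
    case False
    obtain xm where xm: "xm \<in> Sph" "\<forall>x\<in>Sph. u x \<le> u xm" using usc_max[OF usc Sphc False] by blast
    have "u xm < M" by (rule SphM[OF xm(1)])
    then show ?thesis using that[of "M - u xm"] xm by auto
  qed
  define k where "k = max 1 ((\<bar>L * Sb\<bar> + \<bar>2 * B * Gb\<bar> + 1) / (4 * l * g0^2))"
  have kpos: "k > 0" unfolding k_def by simp
  have kbig: "4 * k * l * g0^2 > L * Sb + 2 * B * Gb"
  proof -
    have d: "4 * l * g0^2 > 0" using lpos g0 by simp
    have "k \<ge> (\<bar>L * Sb\<bar> + \<bar>2 * B * Gb\<bar> + 1) / (4 * l * g0^2)" unfolding k_def by simp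
    then have "k * (4 * l * g0^2) \<ge> \<bar>L * Sb\<bar> + \<bar>2 * B * Gb\<bar> + 1" using d by (simp add: pos_divide_le_eq)
    then show ?thesis by (simp add: mult_ac)
  qed
  define w0 where "w0 = exp (- k * (R/2)^2)"
  define \<delta> where "\<delta> = \<gamma> / 2"
  have del: "\<delta> > 0" unfolding \<delta>_def using gam by simp
  define Pq where "Pq x = (x - q') \<bullet> (x - q')" for x
  define \<phi> where "\<phi> = (\<lambda>x. (M + \<delta> * w0) + (-\<delta>) * exp (- k * Pq x))"
  have d1: "((\<lambda>s. exp (- k * s)) has_real_derivative - k * exp (- k * s)) (at s)" for s
    by (auto intro!: derivative_eq_intros)
  have d2: "((\<lambda>s. - k * exp (- k * s)) has_real_derivative k * k * exp (- k * s)) (at s)" for s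
    by (auto intro!: derivative_eq_intros)
  have c2: "continuous_on UNIV (\<lambda>s. k * k * exp (- k * s))" by (intro continuous_intros)
  define g where "g = (\<lambda>x. 0 + (-\<delta>) *\<^sub>R ((- k * exp (- k * Pq x)) *\<^sub>R (2 *\<^sub>R (x - q'))))"
  define H where "H = (\<lambda>x. 0 + (-\<delta>) *\<^sub>R ((k * k * exp (- k * Pq x)) *\<^sub>R outer (2 *\<^sub>R (x - q')) (2 *\<^sub>R (x - q'))
                    + (- k * exp (- k * Pq x)) *\<^sub>R (2 *\<^sub>R mat 1)))"
  have C: "C2w \<phi> g H" unfolding \<phi>_def g_def H_def Pq_def
    by (rule C2w_add[OF C2w_const C2w_scale[OF C2w_comp[OF d1 d2 c2 C2w_Pq]]])
  have \<phi>c: "continuous_on UNIV \<phi>" by (rule C2w_cont_f[OF C])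
  define \<Psi> where "\<Psi> = (\<lambda>x. u x - \<phi> x)"
  have \<Psi>usc: "usc \<Psi>" unfolding \<Psi>_def by (rule usc_diff[OF usc \<phi>c])
  have \<Psi>z: "\<Psi> z = 0" unfolding \<Psi>_def \<phi>_def Pq_def w0_def using uz Pqz by simp
  obtain x0 where x0: "x0 \<in> cball z \<rho>0" "\<forall>x\<in>cball z \<rho>0. \<Psi> x \<le> \<Psi> x0"
    using usc_max[OF \<Psi>usc compact_cball, of z \<rho>0] \<rho>0 by auto
  have "z \<in> cball z \<rho>0" using \<rho>0 by simp
  then have \<Psi>x0: "\<Psi> x0 \<ge> 0" using x0(2) \<Psi>z by fastforce
  have inner: "dist x0 z < \<rho>0"
  proof (rule ccontr)
    assume "\<not> dist x0 z < \<rho>0"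
    then have dx: "dist x0 z = \<rho>0" using x0(1) by (simp add: dist_commute)
    show False
    proof (cases "norm (x0 - q') \<le> R/2")
      case True
      then have "x0 \<in> Sph" unfolding Sph_def using dx by simp
      then have ux: "u x0 \<le> M - \<gamma>" by (rule gam(2))
      have "Pq x0 \<ge> 0" unfolding Pq_def by simp
      then have "exp (- k * Pq x0) \<le> 1" using kpos by simp
      then have "\<delta> * exp (- k * Pq x0) \<le> \<delta>" using del by (simp add: mult_left_le)
      moreover have "\<delta> * w0 \<ge> 0" unfolding w0_def using del by simp
      ultimately have "\<Psi> x0 \<le> - \<gamma> + \<delta>" unfolding \<Psi>_def \<phi>_def using ux by simp
      then show False using \<Psi>x0 gam(1) unfolding \<delta>_def by simp
    next
      case False
      then have "(R/2)^2 < (norm (x0 - q'))^2" using Rp by (intro power_strict_mono) auto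
      then have "(R/2)^2 < Pq x0" unfolding Pq_def by (simp add: power2_norm_eq_inner)
      then have "- k * Pq x0 < - k * (R/2)^2" using kpos by simp
      then have "exp (- k * Pq x0) < w0" unfolding w0_def by simp
      then have "\<delta> * exp (- k * Pq x0) < \<delta> * w0" using del by simp
      then have "\<Psi> x0 < u x0 - M" unfolding \<Psi>_def \<phi>_def by simp
      then show False using \<Psi>x0 uM[of x0] by simp
    qed
  qed
  define e where "e = \<rho>0 - dist x0 z"
  have e: "e > 0" unfolding e_def using inner by simp
  have bsub: "ball x0 e \<subseteq> cball z \<rho>0"
  proof
    fix y assume "y \<in> ball x0 e"
    then have "dist x0 y < e" by simp
    then have "dist z y \<le> \<rho>0" using dist_triangle[of z y x0] unfolding e_def by (simp add: dist_commute)
    then show "y \<in> cball z \<rho>0" by simp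
  qed
  have lm: "\<forall>y\<in>ball x0 e. u y - \<phi> y \<le> u x0 - \<phi> x0" using bsub x0(2) unfolding \<Psi>_def by blast
  define ex where "ex = exp (- k * Pq x0)"
  have ex: "ex > 0" unfolding ex_def by simp
  have HGe: "HG g x0 = (2 * \<delta> * k * ex) *\<^sub>R gv x0"
    unfolding vec_eq_iff HG_nth g_def gv_def ex_def by simp
  have HHe: "HH g H x0 $ i $ j = (-\<delta>) * (k * k * ex * ((2 * gv x0 $ i) * (2 * gv x0 $ j)) + (- k * ex) * SPq q' x0 i j)" for i j
  proof -
    have "HH g H x0 $ i $ j = 0 + (-\<delta>) * HH (\<lambda>x. (- k * exp (- k * Pq x)) *\<^sub>R (2 *\<^sub>R (x - q')))
       (\<lambda>x. (k * k * exp (- k * Pq x)) *\<^sub>R outer (2 *\<^sub>R (x - q')) (2 *\<^sub>R (x - q')) + (- k * exp (- k * Pq x)) *\<^sub>R (2 *\<^sub>R mat 1)) x0 $ i $ j"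
      unfolding g_def H_def HH_add HH_scale HH_const by simp
    also have "\<dots> = (-\<delta>) * (k * k * exp (- k * Pq x0) * (HG (\<lambda>x. 2 *\<^sub>R (x - q')) x0 $ i * HG (\<lambda>x. 2 *\<^sub>R (x - q')) x0 $ j)
        + (- k * exp (- k * Pq x0)) * HH (\<lambda>x. 2 *\<^sub>R (x - q')) (\<lambda>_. 2 *\<^sub>R mat 1) x0 $ i $ j)"
      using HH_comp[of "\<lambda>s. - k * exp (- k * s)" Pq "\<lambda>x. 2 *\<^sub>R (x - q')" "\<lambda>s. k * k * exp (- k * s)" "\<lambda>_. 2 *\<^sub>R mat 1" x0 i j]
      by simp
    finally show ?thesis unfolding HG_Pq HH_Pq gv_def ex_def by simp
  qed
  have x0c: "x0 \<in> cball z \<rho>0" by (rule x0(1))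
  have b1: "\<delta> * ex * (4 * k * k * l * g0^2 - k * L * Sb) \<le> trace (- (A ** symm (HH g H x0)))" if adm: "pucci_adm l L A" for A
  proof -
    have sy: "transpose A = A" by (rule adm_sym[OF adm])
    have E: "S2 A (\<lambda>i j. HH g H x0 $ i $ j) = (-\<delta>) * (k * k * ex * (4 * qf A (gv x0) (gv x0)) + (- k * ex) * S2 A (SPq q' x0))"
    proof -
      have e1: "S2 A (\<lambda>i j. (2 * gv x0 $ i) * (2 * gv x0 $ j)) = 4 * qf A (gv x0) (gv x0)"
        using S2_scale[of A 4 "\<lambda>i j. gv x0 $ i * gv x0 $ j"] S2_qf[of A "gv x0" "gv x0"] by (simp add: mult_ac)
      show ?thesis unfolding HHe by (simp only: S2_add S2_scale e1)
    qed
    have q1: "qf A (gv x0) (gv x0) \<ge> l * g0^2"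
    proof -
      have "g0^2 \<le> (norm (gv x0))^2" using gvlo[OF x0c] g0 by (intro power_mono) auto
      then have "l * g0^2 \<le> l * (norm (gv x0))^2" using lpos by (intro mult_left_mono) auto
      then show ?thesis using adm_lo[OF adm, of "gv x0"] by linarith
    qed
    have q2: "S2 A (SPq q' x0) \<le> L * Sb"
    proof -
      have "\<bar>S2 A (SPq q' x0)\<bar> \<le> L * (\<Sum>i\<in>UNIV. \<Sum>j\<in>UNIV. \<bar>SPq q' x0 i j\<bar>)" by (rule S2_bound[OF adm lpos])
      also have "\<dots> \<le> L * Sb" using Sb[OF x0c] lpos lL by (intro mult_left_mono) auto
      finally show ?thesis by simp
    qed
    have "trace (- (A ** symm (HH g H x0))) = - S2 A (\<lambda>i j. HH g H x0 $ i $ j)" by (rule trace_S2[OF sy])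
    also have "\<dots> = \<delta> * ex * (4 * k * k * qf A (gv x0) (gv x0) - k * S2 A (SPq q' x0))"
      unfolding E by (simp add: algebra_simps)
    finally have T: "trace (- (A ** symm (HH g H x0))) = \<delta> * ex * (4 * k * k * qf A (gv x0) (gv x0) - k * S2 A (SPq q' x0))" .
    have "4 * k * k * l * g0^2 - k * L * Sb \<le> 4 * k * k * qf A (gv x0) (gv x0) - k * S2 A (SPq q' x0)"
    proof -
      have "4 * k * k * (l * g0^2) \<le> 4 * k * k * qf A (gv x0) (gv x0)" using q1 kpos by (intro mult_left_mono) auto
      moreover have "k * S2 A (SPq q' x0) \<le> k * (L * Sb)" using q2 kpos by (intro mult_left_mono) auto
      ultimately show ?thesis by (simp add: mult_ac)
    qed
    then have "\<delta> * ex * (4 * k * k * l * g0^2 - k * L * Sb) \<le> \<delta> * ex * (4 * k * k * qf A (gv x0) (gv x0) - k * S2 A (SPq q' x0))"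
      using del ex by (intro mult_left_mono) auto
    then show ?thesis unfolding T .
  qed
  have b2: "- (B * (2 * \<delta> * k * ex * Gb)) \<le> c \<alpha> x0 * u x0 - b \<alpha> x0 \<bullet> HG g x0" for \<alpha>
  proof -
    have "b \<alpha> x0 \<bullet> HG g x0 \<le> norm (b \<alpha> x0) * norm (HG g x0)" by (rule norm_cauchy_schwarz)
    also have "norm (HG g x0) = 2 * \<delta> * k * ex * norm (gv x0)" unfolding HGe using del kpos ex by simp
    also have "norm (b \<alpha> x0) * (2 * \<delta> * k * ex * norm (gv x0)) \<le> B * (2 * \<delta> * k * ex * Gb)"
    proof (rule mult_mono)
      show "norm (b \<alpha> x0) \<le> B" by (rule Bc[OF x0c])
      show "2 * \<delta> * k * ex * norm (gv x0) \<le> 2 * \<delta> * k * ex * Gb"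
        using Gb[OF x0c] del kpos ex by (intro mult_left_mono) auto
      show "0 \<le> B" using Bc[OF x0c, of \<alpha>] norm_ge_zero[of "b \<alpha> x0"] by linarith
      show "0 \<le> 2 * \<delta> * k * ex * norm (gv x0)" using del kpos ex by simp
    qed
    finally have "b \<alpha> x0 \<bullet> HG g x0 \<le> B * (2 * \<delta> * k * ex * Gb)" .
    then show ?thesis using cu0[of \<alpha> x0] by linarith
  qed
  have "\<delta> * ex * (4 * k * k * l * g0^2 - k * L * Sb) + - (B * (2 * \<delta> * k * ex * Gb)) \<le> 0"
    by (rule touch[OF sub C e lm lpos lL b1 b2])
  moreover have "\<delta> * ex * (4 * k * k * l * g0^2 - k * L * Sb) + - (B * (2 * \<delta> * k * ex * Gb))
      = (\<delta> * ex * k) * (4 * k * l * g0^2 - L * Sb - 2 * B * Gb)" by (simp add: algebra_simps)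
  moreover have "(\<delta> * ex * k) * (4 * k * l * g0^2 - L * Sb - 2 * B * Gb) > 0"
    using del ex kpos kbig by simp
  ultimately show False by linarith
qed



definition pidx :: "('d::finite) + 'd \<Rightarrow> 'd + 'd + unit" where
  "pidx i = (case i of Inl k \<Rightarrow> Inr (Inl k) | Inr k \<Rightarrow> Inl k)"
definition sg :: "('d::finite) + 'd \<Rightarrow> real" where
  "sg i = (case i of Inl k \<Rightarrow> 1 | Inr k \<Rightarrow> -1)"

lemma hfield_eq: "hfield i y = axis (emb i) 1 + (2 * sg i * y $ pidx i) *\<^sub>R et"
  by (cases i) (auto simp: hfield_def emb_def sg_def pidx_def et_def)

lemma hfield_pidx: "hfield i x $ pidx i = 0"
  by (cases i) (auto simp: hfield_def pidx_def axis_def)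

lemma pidx_ne_tt: "pidx i \<noteq> Inr (Inr ())"
  by (cases i) (auto simp: pidx_def)

lemma hfield_line: "hfield i (x + s *\<^sub>R hfield i x) = hfield i x"
proof -
  have e: "(x + s *\<^sub>R hfield i x) $ pidx i = x $ pidx i" using hfield_pidx[of i x] by simp
  have "hfield i (x + s *\<^sub>R hfield i x) = axis (emb i) 1 + (2 * sg i * (x + s *\<^sub>R hfield i x) $ pidx i) *\<^sub>R et"
    by (rule hfield_eq)
  also have "\<dots> = axis (emb i) 1 + (2 * sg i * x $ pidx i) *\<^sub>R et" unfolding e ..
  also have "\<dots> = hfield i x" by (rule hfield_eq[symmetric])
  finally show ?thesis .
qed

lemma two_coord: assumes "p \<noteq> t" shows "\<bar>2 * (w $ p) * (w $ t)\<bar> \<le> (norm (w :: real^'n::finite))^2"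
proof -
  have "(w$p)^2 + (w$t)^2 = (\<Sum>j\<in>{p,t}. (w$j)^2)" using assms by simp
  also have "\<dots> \<le> (\<Sum>j\<in>UNIV. (w$j)^2)" by (rule sum_mono2) auto
  also have "\<dots> = w \<bullet> w" by (simp add: inner_vec_def power2_eq_square)
  also have "\<dots> = (norm w)^2" by (simp add: power2_norm_eq_inner)
  finally have a: "(w$p)^2 + (w$t)^2 \<le> (norm w)^2" .
  have "\<bar>2 * (w $ p) * (w $ t)\<bar> \<le> (w$p)^2 + (w$t)^2"
    using sum_squares_bound[of "w$p" "w$t"] abs_le_square_iff
    by (smt (verit, ccfv_SIG) power2_diff power2_sum zero_le_power2)
  then show ?thesis using a by linarith
qed

lemma exp_pow_bound:
  assumes "a \<ge> 0" "n > 0"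
  shows "(1 + a / real n) ^ n \<le> exp a"
proof -
  have "1 + a / real n \<le> exp (a / real n)" by (rule exp_ge_add_one_self)
  then have "(1 + a / real n) ^ n \<le> exp (a / real n) ^ n" using assms by (intro power_mono) auto
  also have "\<dots> = exp (real n * (a / real n))" by (rule exp_of_nat_mult[symmetric])
  also have "\<dots> = exp a" using assms by simp
  finally show ?thesis .
qed


lemma sq_expand: "(norm (w + h *\<^sub>R v))^2 = (norm w)^2 + 2 * h * (w \<bullet> v) + h^2 * (norm (v::'a::real_inner))^2"
  unfolding power2_norm_eq_inner
  by (simp add: inner_add_left inner_add_right inner_commute[of v w] power2_eq_square algebra_simps)

lemma line_inv:
  fixes F :: "('d::finite) pt set"
  assumes Fc: "closed F" and xF: "x \<in> F"
    and char: "\<And>q z. q \<notin> F \<Longrightarrow> z \<in> F \<Longrightarrow> (\<forall>y. dist y q < dist q z \<longrightarrow> y \<notin> F) \<Longrightarrow> (z - q) \<bullet> hfield i z = 0"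
  shows "x + S *\<^sub>R hfield i x \<in> F"
proof -
  define V where "V = hfield i x"
  define \<gamma> where "\<gamma> s = x + s *\<^sub>R V" for s
  define D where "D s = (infdist (\<gamma> s) F)^2" for s
  have Fne: "F \<noteq> {}" using xF by blast
  have D0: "D 0 = 0" unfolding D_def \<gamma>_def using xF by (simp add: in_closed_iff_infdist_zero[OF Fc Fne, symmetric])
  have Dnn: "D s \<ge> 0" for s unfolding D_def by simp
  have step: "D (s + h) \<le> D s * (1 + 2 * \<bar>h\<bar>) + h^2 * (norm V)^2" for s h
  proof (cases "\<gamma> s \<in> F")
    case True
    have "infdist (\<gamma> (s + h)) F \<le> dist (\<gamma> (s + h)) (\<gamma> s)" by (rule infdist_le[OF True])
    also have "\<dots> = \<bar>h\<bar> * norm V" unfolding \<gamma>_def by (simp add: dist_norm algebra_simps)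
    finally have "D (s + h) \<le> (\<bar>h\<bar> * norm V)^2" unfolding D_def by (intro power_mono) (auto simp: infdist_nonneg)
    also have "\<dots> = h^2 * (norm V)^2" by (simp add: power_mult_distrib)
    finally show ?thesis using Dnn[of s] by (smt (verit) mult_nonneg_nonneg)
  next
    case False
    define q where "q = \<gamma> s"
    obtain z where z: "z \<in> F" "\<And>y. y \<in> F \<Longrightarrow> dist q z \<le> dist q y"
      using distance_attains_inf[OF Fc Fne, of q] by blast
    have idq: "infdist q F = dist q z"
    proof (rule antisym)
      show "infdist q F \<le> dist q z" by (rule infdist_le[OF z(1)])
      have "dist q z \<le> (INF y\<in>F. dist q y)" using Fne z(2) by (intro cINF_greatest) auto
      then show "dist q z \<le> infdist q F" unfolding infdist_def using Fne by simp
    qed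
    have ball: "\<forall>y. dist y q < dist q z \<longrightarrow> y \<notin> F"
    proof (intro allI impI notI)
      fix y assume "dist y q < dist q z" "y \<in> F"
      then show False using z(2)[of y] by (simp add: dist_commute)
    qed
    have ch: "(z - q) \<bullet> hfield i z = 0" using char[OF _ z(1) ball] False unfolding q_def by blast
    have hq: "hfield i q = V" unfolding q_def \<gamma>_def V_def by (rule hfield_line)
    have diff: "hfield i q - hfield i z = (2 * sg i * (q $ pidx i - z $ pidx i)) *\<^sub>R et"
      unfolding hfield_eq[of i q] hfield_eq[of i z] by (simp add: algebra_simps)
    have "(q - z) \<bullet> V = (q - z) \<bullet> (hfield i q - hfield i z)"
      using ch unfolding hq[symmetric] by (simp add: inner_diff_right inner_commute inner_diff_left)
    also have "\<dots> = sg i * (2 * (q - z) $ pidx i * (q - z) $ Inr (Inr ()))"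
      unfolding diff by (simp add: et_def inner_axis algebra_simps)
    finally have qv: "(q - z) \<bullet> V = sg i * (2 * (q - z) $ pidx i * (q - z) $ Inr (Inr ()))" .
    have sgb: "\<bar>sg i\<bar> = 1" by (cases i) (auto simp: sg_def)
    have e1: "\<bar>(q - z) \<bullet> V\<bar> = \<bar>sg i\<bar> * \<bar>2 * (q - z) $ pidx i * (q - z) $ Inr (Inr ())\<bar>"
      unfolding qv by (rule abs_mult)
    then have e2: "\<bar>(q - z) \<bullet> V\<bar> = \<bar>2 * (q - z) $ pidx i * (q - z) $ Inr (Inr ())\<bar>"
      using sgb by (simp only: mult_1_left)
    have "\<bar>(q - z) \<bullet> V\<bar> \<le> (norm (q - z))^2"
      using e2 two_coord[OF pidx_ne_tt[of i], of "q - z"] by linarith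
    then have qvb: "\<bar>(q - z) \<bullet> V\<bar> \<le> D s" unfolding D_def q_def[symmetric] idq by (simp add: dist_norm)
    have "infdist (\<gamma> (s + h)) F \<le> dist (\<gamma> (s + h)) z" by (rule infdist_le[OF z(1)])
    then have "D (s + h) \<le> (dist (\<gamma> (s + h)) z)^2" unfolding D_def by (intro power_mono) (auto simp: infdist_nonneg)
    also have "(dist (\<gamma> (s + h)) z)^2 = (norm ((q - z) + h *\<^sub>R V))^2"
      unfolding q_def \<gamma>_def by (simp add: dist_norm algebra_simps)
    also have "\<dots> = (norm (q - z))^2 + 2 * h * ((q - z) \<bullet> V) + h^2 * (norm V)^2"
      by (rule sq_expand)
    also have "(norm (q - z))^2 = D s" unfolding D_def q_def[symmetric] idq by (simp add: dist_norm)
    also have "2 * h * ((q - z) \<bullet> V) \<le> 2 * \<bar>h\<bar> * D s"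
    proof -
      have "2 * h * ((q - z) \<bullet> V) \<le> \<bar>2 * h * ((q - z) \<bullet> V)\<bar>" by simp
      also have "\<dots> = 2 * \<bar>h\<bar> * \<bar>(q - z) \<bullet> V\<bar>" by (simp add: abs_mult)
      also have "\<dots> \<le> 2 * \<bar>h\<bar> * D s" using qvb by (intro mult_left_mono) auto
      finally show ?thesis .
    qed
    finally show ?thesis by (simp add: algebra_simps)
  qed
  have iter: "D (real j * h) \<le> real j * h^2 * (norm V)^2 * (1 + 2 * \<bar>h\<bar>) ^ j" for j h
  proof (induction j)
    case 0 then show ?case using D0 by simp
  next
    case (Suc j)
    have "D (real (Suc j) * h) = D (real j * h + h)" by (simp add: algebra_simps)
    also have "\<dots> \<le> D (real j * h) * (1 + 2 * \<bar>h\<bar>) + h^2 * (norm V)^2" by (rule step)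
    also have "\<dots> \<le> (real j * h^2 * (norm V)^2 * (1 + 2 * \<bar>h\<bar>) ^ j) * (1 + 2 * \<bar>h\<bar>) + h^2 * (norm V)^2"
      using Suc.IH by (intro add_right_mono mult_right_mono) auto
    also have "\<dots> \<le> real (Suc j) * h^2 * (norm V)^2 * (1 + 2 * \<bar>h\<bar>) ^ Suc j"
    proof -
      have "1 \<le> (1 + 2 * \<bar>h\<bar>) ^ Suc j" by (rule one_le_power) simp
      then have "h^2 * (norm V)^2 * 1 \<le> h^2 * (norm V)^2 * (1 + 2 * \<bar>h\<bar>) ^ Suc j"
        by (intro mult_left_mono) auto
      then show ?thesis by (simp add: algebra_simps)
    qed
    finally show ?case .
  qed
  have bound: "D S \<le> S^2 * (norm V)^2 * exp (2 * \<bar>S\<bar>) / real n" if n: "n > 0" for n :: nat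
  proof -
    have "D S = D (real n * (S / real n))" using n by simp
    also have "\<dots> \<le> real n * (S / real n)^2 * (norm V)^2 * (1 + 2 * \<bar>S / real n\<bar>) ^ n" by (rule iter)
    also have "(1 + 2 * \<bar>S / real n\<bar>) = 1 + (2 * \<bar>S\<bar>) / real n" by (simp add: abs_divide)
    also have "(1 + (2 * \<bar>S\<bar>) / real n) ^ n \<le> exp (2 * \<bar>S\<bar>)" by (rule exp_pow_bound) (use n in auto)
    then have "real n * (S / real n)^2 * (norm V)^2 * (1 + (2 * \<bar>S\<bar>) / real n) ^ n \<le> real n * (S / real n)^2 * (norm V)^2 * exp (2 * \<bar>S\<bar>)"
      by (intro mult_left_mono) auto
    also have "real n * (S / real n)^2 * (norm V)^2 * exp (2 * \<bar>S\<bar>) = S^2 * (norm V)^2 * exp (2 * \<bar>S\<bar>) / real n"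
      using n by (simp add: power2_eq_square field_simps)
    finally show ?thesis .
  qed
  have "D S = 0"
  proof (rule ccontr)
    assume "D S \<noteq> 0"
    then have Dp: "D S > 0" using Dnn[of S] by simp
    define C where "C = S^2 * (norm V)^2 * exp (2 * \<bar>S\<bar>)"
    obtain n :: nat where n: "real n > C / D S" using reals_Archimedean2 by blast
    have C0: "C \<ge> 0" unfolding C_def by simp
    have np: "n > 0" using n C0 Dp by (metis divide_nonneg_pos of_nat_0 of_nat_less_iff not_le order.strict_trans1 gr0I)
    have "D S \<le> C / real n" using bound[OF np] unfolding C_def .
    moreover have "C / real n < D S" using n np Dp by (simp add: divide_less_eq mult.commute pos_divide_less_eq)
    ultimately show False by simp
  qed
  then have "infdist (\<gamma> S) F = 0" unfolding D_def by simp
  then show ?thesis using in_closed_iff_infdist_zero[OF Fc Fne] unfolding \<gamma>_def V_def by blast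
qed


lemma tshift:
  fixes F :: "('d::finite) pt set"
  assumes inv: "\<And>x i s. x \<in> F \<Longrightarrow> x + s *\<^sub>R hfield i x \<in> F" and xF: "x \<in> F"
  shows "x + \<tau> *\<^sub>R et \<in> F"
proof -
  define k0 :: 'd where "k0 = undefined"
  define a :: real where "a = 1"
  define b :: real where "b = - \<tau> / 4"
  define x1 where "x1 = x + a *\<^sub>R hfield (Inl k0) x"
  define x2 where "x2 = x1 + b *\<^sub>R hfield (Inr k0) x1"
  define x3 where "x3 = x2 + (-a) *\<^sub>R hfield (Inl k0) x2"
  define x4 where "x4 = x3 + (-b) *\<^sub>R hfield (Inr k0) x3"
  have "x4 \<in> F" unfolding x4_def x3_def x2_def x1_def by (intro inv xF)
  moreover have "x4 = x + \<tau> *\<^sub>R et"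
    unfolding x4_def x3_def x2_def x1_def
    by (simp add: vec_eq_iff hfield_def et_def axis_def a_def b_def algebra_simps split: sum.split)
  ultimately show ?thesis by simp
qed

lemma hmove:
  fixes F :: "('d::finite) pt set"
  assumes inv: "\<And>x i s. x \<in> F \<Longrightarrow> x + s *\<^sub>R hfield i x \<in> F" and xF: "x \<in> F"
  shows "x + s *\<^sub>R axis (emb i) 1 \<in> F"
proof -
  have "x + s *\<^sub>R hfield i x \<in> F" by (rule inv[OF xF])
  then have mem: "(x + s *\<^sub>R hfield i x) + (- (2 * sg i * x $ pidx i * s)) *\<^sub>R et \<in> F"
    using tshift[of F "x + s *\<^sub>R hfield i x" "- (2 * sg i * x $ pidx i * s)"] inv by blast
  have eq: "(x + s *\<^sub>R hfield i x) + (- (2 * sg i * x $ pidx i * s)) *\<^sub>R et = x + s *\<^sub>R axis (emb i) 1"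
    unfolding hfield_eq[of i x] by (simp add: algebra_simps)
  from mem show ?thesis unfolding eq .
qed

lemma coord_move:
  fixes F :: "('d::finite) pt set"
  assumes inv: "\<And>x i s. x \<in> F \<Longrightarrow> x + s *\<^sub>R hfield i x \<in> F" and xF: "x \<in> F"
  shows "x + s *\<^sub>R axis j 1 \<in> F"
proof (cases j)
  case (Inl k)
  then have "j = emb (Inl k)" by (simp add: emb_def)
  then show ?thesis using hmove[OF inv xF] by simp
next
  case (Inr j')
  show ?thesis
  proof (cases j')
    case (Inl k)
    then have "j = emb (Inr k)" using Inr by (simp add: emb_def)
    then show ?thesis using hmove[OF inv xF] by simp
  next
    case (Inr u)
    then have "axis j 1 = (et :: 'd pt)" using \<open>j = Inr j'\<close> by (simp add: et_def)
    then show ?thesis using tshift[OF inv xF] by simp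
  qed
qed

lemma connect:
  fixes F :: "('d::finite) pt set"
  assumes inv: "\<And>x i s. x \<in> F \<Longrightarrow> x + s *\<^sub>R hfield i x \<in> F" and xF: "x0 \<in> F"
  shows "y \<in> F"
proof -
  have fin: "x0 + (\<Sum>j\<in>S. (y $ j - x0 $ j) *\<^sub>R axis j 1) \<in> F" if "finite S" for S
    using that
  proof (induction S rule: finite_induct)
    case empty then show ?case using xF by simp
  next
    case (insert j S)
    have "x0 + (\<Sum>j\<in>S. (y $ j - x0 $ j) *\<^sub>R axis j 1) + (y $ j - x0 $ j) *\<^sub>R axis j 1 \<in> F"
      by (rule coord_move[OF inv insert.IH])
    then show ?case using insert.hyps by (simp add: algebra_simps)
  qed
  have "(\<Sum>j\<in>UNIV. (y $ j - x0 $ j) *\<^sub>R axis j (1::real)) = y - x0"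
    by (simp add: vec_eq_iff axis_def if_distrib cong: if_cong)
  then show ?thesis using fin[of UNIV] by simp
qed



lemma partA:
  fixes b :: "'a \<Rightarrow> ('d::finite) pt \<Rightarrow> 'd hz" and c :: "'a \<Rightarrow> 'd pt \<Rightarrow> real" and u :: "'d pt \<Rightarrow> real"
  assumes sub: "visc_sub (\<lambda>x r p M. pucci_minus l L M + (INF \<alpha>. c \<alpha> x * r - b \<alpha> x \<bullet> p)) u"
    and lpos: "0 < l" and lL: "l \<le> L"
    and Hi_fin: "\<forall>x r p. bdd_below (range (\<lambda>\<alpha>. c \<alpha> x * r - b \<alpha> x \<bullet> p))"
    and b_lip: "\<forall>R>0. \<exists>K. \<forall>\<alpha> x y. norm x \<le> R \<longrightarrow> norm y \<le> R \<longrightarrow> norm (b \<alpha> x - b \<alpha> y) \<le> K * norm (x - y)"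
    and c_nonneg: "\<forall>\<alpha> x. c \<alpha> x \<ge> 0"
    and key: "\<exists>R0. \<forall>x. hrho x \<ge> R0 \<longrightarrow> hproj x \<noteq> 0 \<longrightarrow>
               (\<forall>\<alpha>. b \<alpha> x \<bullet> heta x / (norm (hproj x))\<^sup>2
                     - c \<alpha> x * (hrho x ^ 4 / (norm (hproj x))\<^sup>2) * ln (hrho x)
                   \<le> l - L * ((2 * real CARD('d) + 2) - 1))"
    and ls: "Limsup at_infinity (\<lambda>x. ereal (u x / ln (hrho x))) \<le> 0"
    and cu: "(\<forall>\<alpha> x. c \<alpha> x = 0) \<or> (\<forall>x. u x \<ge> 0)"
  shows "\<exists>k. \<forall>x. u x = k"
proof -
  obtain R0 where R0: "\<forall>x. hrho x \<ge> R0 \<longrightarrow> hproj x \<noteq> 0 \<longrightarrow>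
               (\<forall>\<alpha>. b \<alpha> x \<bullet> heta x / (norm (hproj x))\<^sup>2
                     - c \<alpha> x * (hrho x ^ 4 / (norm (hproj x))\<^sup>2) * ln (hrho x)
                   \<le> l - L * ((2 * real CARD('d) + 2) - 1))" using key by blast
  obtain z where z: "\<And>x. u x \<le> u z" using step1[OF sub lpos lL Hi_fin b_lip c_nonneg R0 ls cu] by blast
  define M where "M = u z"
  have uM: "u x \<le> M" for x unfolding M_def by (rule z)
  define F where "F = {x. u x = M}"
  have usc: "usc u" using sub unfolding visc_sub_def by blast
  have Fc: "closed F"
  proof -
    have "F = - {x. u x < M}" unfolding F_def using uM by (auto simp: order.order_iff_strict)
    moreover have "open {x. u x < M}" using usc unfolding usc_def by blast
    ultimately show ?thesis by (simp add: closed_Compl)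
  qed
  have zF: "z \<in> F" unfolding F_def M_def by simp
  have cu0: "c \<alpha> x * u x \<ge> 0" for \<alpha> x
    using cu c_nonneg by (metis mult_eq_0_iff mult_nonneg_nonneg order_refl)
  have inv: "x + s *\<^sub>R hfield i x \<in> F" if "x \<in> F" for x i s
  proof (rule line_inv[OF Fc that])
    fix q z' assume qF: "q \<notin> F" and zF': "z' \<in> F" and bl: "\<forall>y. dist y q < dist q z' \<longrightarrow> y \<notin> F"
    have uz': "u z' = M" using zF' unfolding F_def by simp
    have zq: "z' \<noteq> q" using qF zF' by blast
    have inb: "u y < M" if "dist y q < dist q z'" for y
    proof -
      have "y \<notin> F" using bl that by blast
      then have "u y \<noteq> M" unfolding F_def by simp
      then show ?thesis using uM[of y] by simp
    qed
    show "(z' - q) \<bullet> hfield i z' = 0"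
      by (rule hopf[OF sub lpos lL Hi_fin b_lip cu0 uM uz' zq inb])
  qed
  have "y \<in> F" for y by (rule connect[OF inv zF])
  then show ?thesis unfolding F_def by blast
qed

lemma sup_neg: "(SUP \<alpha>\<in>S. f \<alpha>) = - (INF \<alpha>\<in>S. - f \<alpha> :: real)"
  by (simp add: Inf_real_def image_image)

lemma mm_neg: "A ** (- Y) = - (A ** Y :: real^'n::finite^'n)"
  by (simp add: vec_eq_iff matrix_matrix_mult_def sum_negf)

lemma pucci_plus_neg: "pucci_plus l L (- Y) = - pucci_minus l L (Y :: real^'n::finite^'n)"
  unfolding pucci_plus_def pucci_minus_def mm_neg
  by (subst sup_neg) (simp add: trace_neg)

lemma symm_neg: "symm (- X) = - symm (X :: real^'n::finite^'n)"
proof -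
  have t: "transpose (- X) = - transpose X" by (simp add: transpose_def vec_eq_iff)
  show ?thesis unfolding symm_def t by (simp add: algebra_simps)
qed

lemma mv_neg: "(- M) *v h = - (M *v (h :: real^'n::finite))"
  by (simp add: vec_eq_iff matrix_vector_mult_def sum_negf)

lemma C2_C2w: "C2 f \<Longrightarrow> \<exists>g H. C2w f g H"
  unfolding C2_def C2w_def by blast

lemma C2w_neg: "C2w f g H \<Longrightarrow> C2w (\<lambda>x. - f x) (\<lambda>x. - g x) (\<lambda>x. - H x)"
  using C2w_scale[of f g H "-1"] by simp

lemma HG_neg: "HG (\<lambda>x. - g x) x = - HG g x"
  by (simp add: vec_eq_iff HG_nth)

lemma HH_neg: "HH (\<lambda>x. - g x) (\<lambda>x. - H x) x = - HH g H x"
  by (simp add: vec_eq_iff HH_nth mv_neg)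

lemma super_to_sub:
  fixes b :: "'a \<Rightarrow> ('d::finite) pt \<Rightarrow> 'd hz" and c :: "'a \<Rightarrow> 'd pt \<Rightarrow> real" and v :: "'d pt \<Rightarrow> real"
  assumes sup: "visc_super (\<lambda>x r p M. pucci_plus l L M + (SUP \<alpha>. c \<alpha> x * r - b \<alpha> x \<bullet> p)) v"
  shows "visc_sub (\<lambda>x r p M. pucci_minus l L M + (INF \<alpha>. c \<alpha> x * r - b \<alpha> x \<bullet> p)) (\<lambda>x. - v x)"
  unfolding visc_sub_def
proof (intro conjI allI impI)
  have "lsc v" using sup unfolding visc_super_def by blast
  then show "usc (\<lambda>x. - v x)" unfolding usc_def lsc_def
  proof (intro allI)
    fix t assume "\<forall>t. open {x. t < v x}"
    then have "open {x. - t < v x}" by blast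
    moreover have "{x. - v x < t} = {x. - t < v x}" by auto
    ultimately show "open {x. - v x < t}" by simp
  qed
next
  fix \<phi> x0
  assume C: "C2 \<phi>" and lm: "\<exists>e>0. \<forall>y\<in>ball x0 e. - v y - \<phi> y \<le> - v x0 - \<phi> x0"
  obtain g H where CW: "C2w \<phi> g H" using C2_C2w[OF C] by blast
  have CWn: "C2w (\<lambda>x. - \<phi> x) (\<lambda>x. - g x) (\<lambda>x. - H x)" by (rule C2w_neg[OF CW])
  have lm2: "\<exists>e>0. \<forall>y\<in>ball x0 e. v y - (\<lambda>x. - \<phi> x) y \<ge> v x0 - (\<lambda>x. - \<phi> x) x0"
    using lm by (auto simp: algebra_simps)
  have "pucci_plus l L (symm (hhess (\<lambda>x. - \<phi> x) x0)) + (SUP \<alpha>. c \<alpha> x0 * v x0 - b \<alpha> x0 \<bullet> hgrad (\<lambda>x. - \<phi> x) x0) \<ge> 0"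
    using sup C2w_C2[OF CWn] lm2 unfolding visc_super_def by blast
  moreover have "hgrad (\<lambda>x. - \<phi> x) x0 = - hgrad \<phi> x0"
    using hgrad_C2w[OF CWn] hgrad_C2w[OF CW] HG_neg by simp
  moreover have "hhess (\<lambda>x. - \<phi> x) x0 = - hhess \<phi> x0"
    using hhess_C2w[OF CWn] hhess_C2w[OF CW] HH_neg by simp
  moreover have "(SUP \<alpha>. c \<alpha> x0 * v x0 - b \<alpha> x0 \<bullet> (- hgrad \<phi> x0)) = - (INF \<alpha>. c \<alpha> x0 * (- v x0) - b \<alpha> x0 \<bullet> hgrad \<phi> x0)"
    by (subst sup_neg) (simp add: algebra_simps)
  ultimately show "pucci_minus l L (symm (hhess \<phi> x0)) + (INF \<alpha>. c \<alpha> x0 * (- v x0) - b \<alpha> x0 \<bullet> hgrad \<phi> x0) \<le> 0"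
    by (simp add: symm_neg pucci_plus_neg)
qed

theorem theorem4p2:
  fixes l L :: real
    and b :: "'a \<Rightarrow> ('d::finite) pt \<Rightarrow> 'd hz"
    and c :: "'a \<Rightarrow> 'd pt \<Rightarrow> real"
  defines "Q \<equiv> 2 * real CARD('d) + 2"
  defines "Hi \<equiv> (\<lambda>x r p. INF \<alpha>. c \<alpha> x * r - b \<alpha> x \<bullet> p)"
  defines "Hs \<equiv> (\<lambda>x r p. SUP \<alpha>. c \<alpha> x * r - b \<alpha> x \<bullet> p)"
  assumes lpos: "0 < l" and lL: "l \<le> L"
    and Hi_fin: "\<forall>x r p. bdd_below (range (\<lambda>\<alpha>. c \<alpha> x * r - b \<alpha> x \<bullet> p))"
    and Hs_fin: "\<forall>x r p. bdd_above (range (\<lambda>\<alpha>. c \<alpha> x * r - b \<alpha> x \<bullet> p))"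
    and b_lip: "\<forall>R>0. \<exists>K. \<forall>\<alpha> x y. norm x \<le> R \<longrightarrow> norm y \<le> R \<longrightarrow>
                   norm (b \<alpha> x - b \<alpha> y) \<le> K * norm (x - y)"
    and c_nonneg: "\<forall>\<alpha> x. c \<alpha> x \<ge> 0"
    and c_cont: "\<forall>R>0. \<forall>\<epsilon>>0. \<exists>\<delta>>0. \<forall>\<alpha> x y. norm x \<le> R \<longrightarrow> norm y \<le> R \<longrightarrow>
                   norm (x - y) < \<delta> \<longrightarrow> \<bar>c \<alpha> x - c \<alpha> y\<bar> < \<epsilon>"
    and key: "\<exists>R0. \<forall>x. hrho x \<ge> R0 \<longrightarrow> hproj x \<noteq> 0 \<longrightarrow>
               (\<forall>\<alpha>. b \<alpha> x \<bullet> heta x / (norm (hproj x))\<^sup>2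
                     - c \<alpha> x * (hrho x ^ 4 / (norm (hproj x))\<^sup>2) * ln (hrho x)
                   \<le> l - L * (Q - 1))"
  shows "(\<forall>u. visc_sub (\<lambda>x r p M. pucci_minus l L M + Hi x r p) u
            \<longrightarrow> Limsup at_infinity (\<lambda>x. ereal (u x / ln (hrho x))) \<le> 0
            \<longrightarrow> ((\<forall>\<alpha> x. c \<alpha> x = 0) \<or> (\<forall>x. u x \<ge> 0))
            \<longrightarrow> (\<exists>k. \<forall>x. u x = k))
       \<and> (\<forall>v. visc_super (\<lambda>x r p M. pucci_plus l L M + Hs x r p) v
            \<longrightarrow> Liminf at_infinity (\<lambda>x. ereal (v x / ln (hrho x))) \<ge> 0
            \<longrightarrow> ((\<forall>\<alpha> x. c \<alpha> x = 0) \<or> (\<forall>x. v x \<le> 0))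
            \<longrightarrow> (\<exists>k. \<forall>x. v x = k))"
proof -
  have key': "\<exists>R0. \<forall>x. hrho x \<ge> R0 \<longrightarrow> hproj x \<noteq> 0 \<longrightarrow>
               (\<forall>\<alpha>. b \<alpha> x \<bullet> heta x / (norm (hproj x))\<^sup>2
                     - c \<alpha> x * (hrho x ^ 4 / (norm (hproj x))\<^sup>2) * ln (hrho x)
                   \<le> l - L * ((2 * real CARD('d) + 2) - 1))"
    using key unfolding Q_def .
  show ?thesis
  proof (intro conjI allI impI)
    fix u :: "'d pt \<Rightarrow> real"
    assume sub: "visc_sub (\<lambda>x r p M. pucci_minus l L M + Hi x r p) u"
      and ls: "Limsup at_infinity (\<lambda>x. ereal (u x / ln (hrho x))) \<le> 0"
      and cu: "(\<forall>\<alpha> x. c \<alpha> x = 0) \<or> (\<forall>x. u x \<ge> 0)"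
    have sub': "visc_sub (\<lambda>x r p M. pucci_minus l L M + (INF \<alpha>. c \<alpha> x * r - b \<alpha> x \<bullet> p)) u"
      using sub unfolding Hi_def .
    show "\<exists>k. \<forall>x. u x = k" by (rule partA[OF sub' lpos lL Hi_fin b_lip c_nonneg key' ls cu])
  next
    fix v :: "'d pt \<Rightarrow> real"
    assume sup: "visc_super (\<lambda>x r p M. pucci_plus l L M + Hs x r p) v"
      and li: "Liminf at_infinity (\<lambda>x. ereal (v x / ln (hrho x))) \<ge> 0"
      and cv: "(\<forall>\<alpha> x. c \<alpha> x = 0) \<or> (\<forall>x. v x \<le> 0)"
    have sup': "visc_super (\<lambda>x r p M. pucci_plus l L M + (SUP \<alpha>. c \<alpha> x * r - b \<alpha> x \<bullet> p)) v"
      using sup unfolding Hs_def .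
    have sub': "visc_sub (\<lambda>x r p M. pucci_minus l L M + (INF \<alpha>. c \<alpha> x * r - b \<alpha> x \<bullet> p)) (\<lambda>x. - v x)"
      by (rule super_to_sub[OF sup'])
    have e: "(\<lambda>x. ereal (- v x / ln (hrho x))) = (\<lambda>x. - ereal (v x / ln (hrho x)))" by simp
    have ls: "Limsup at_infinity (\<lambda>x. ereal (- v x / ln (hrho x))) \<le> 0"
      unfolding e ereal_Limsup_uminus using li by simp
    have cu: "(\<forall>\<alpha> x. c \<alpha> x = 0) \<or> (\<forall>x. - v x \<ge> 0)" using cv by auto
    obtain k where k: "\<forall>x. - v x = k" using partA[OF sub' lpos lL Hi_fin b_lip c_nonneg key' ls cu] by blast
    then have "\<forall>x. v x = - k" by (metis minus_minus)
    then show "\<exists>k. \<forall>x. v x = k" by blast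
  qed
qed

end
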